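(* Let $\Psi$ be a vectorial FQ operation which is Clifford conservative, natural, transposition invariant and orthogonally invariant, and let $\hat p^{[1]}_1,\dots,\hat p^{[1]}_5$ be the first-order coefficients of its first component in the mixed basis. Then $\hat p^{[1]}_1=\hat p^{[1]}_2$ and $\hat p^{[1]}_4=\hat p^{[1]}_5$, and moreover: (a) if $\Psi\circ\Psi=\mathrm{Id}$, then $\hat p^{[1]}_1,\hat p^{[1]}_3,\hat p^{[1]}_4\in\{-1,1\}$; (b) if $\Psi\circ\Psi=\Psi$, then $\hat p^{[1]}_1,\hat p^{[1]}_3,\hat p^{[1]}_4\in\{0,1\}$; (c) if $\Psi\circ\Psi\circ\Psi=\Psi$, then $\hat p^{[1]}_1,\hat p^{[1]}_3,\hat p^{[1]}_4\in\{-1,0,1\}$.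
   Context: Setting. $(Q_1,Q_2)$ is a Clifford system: $Q_1^2=Q_2^2=-1$, $Q_1Q_2=-Q_2Q_1$. $R_1,R_2$ are formal noncommuting infinitesimal variables; one works in the real algebra generated by $Q_1,Q_2,R_1,R_2$ (free apart from the Clifford relations), completed with respect to total degree in $R_1,R_2$, or in extensions of it by further formal infinitesimal elements. Put $A_i=Q_i+R_i$. For $Q$ with $Q^2=-1$ and any $X$ put $X^0_Q=\frac12(X+Q^{-1}XQ)$, $X^1_Q=\frac12(X-Q^{-1}XQ)$. The split variables are $r_1,\dots,r_8$: for $j\in\{1,2\}$, $\iota_1,\iota_2\in\{0,1\}$, $r_{4(j-1)+2\iota_1+\iota_2+1}=((R_jQ_j^{-1})^{\iota_1}_{Q_1})^{\iota_2}_{Q_2}$. A vectorial FQ operation around $(Q_1,Q_2)$ is $\Psi(A_1,A_2)=(f_1(r)Q_1,f_2(r)Q_2)$ with $f_1,f_2$ formal real noncommutative power series in eight variables, identified with this pair of series; the same series can be evaluated relative to any other Clifford system $(Q'_1,Q'_2)$ at $(A'_1,A'_2)$ with $A'_i-Q'_i$ infinitesimal, by forming the split variables of $A'_i-Q'_i$ relative to $(Q'_1,Q'_2)$ and multiplying by $Q'_s$. Clifford conservative: both constant terms equal $1$. Composition: for Clifford conservative $\Psi_1$, $\Psi_2\circ\Psi_1$ is obtained by evaluating $\Psi_2$ (around $(Q_1,Q_2)$) at $\Psi_1(A_1,A_2)$ and expanding in $r_1,\dots,r_8$; $\mathrm{Id}$ is $(A_1,A_2)\mapsto(A_1,A_2)$.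 Mixed basis: $\hat r_1=\frac12(r_2-r_7)$, $\hat r_2=\frac12(r_2+r_7)$, $\hat r_3=\frac12(r_1+r_5)$, $\hat r_4=\frac12(r_1-r_5)$, $\hat r_5=\frac12(r_4-r_8)$, $\hat r_6=\frac12(r_4+r_8)$, $\hat r_7=\frac12(r_3+r_6)$, $\hat r_8=\frac12(r_3-r_6)$; $\hat p^{[s]}_k$ is the coefficient of $\hat r_k$ in $f_s$ rewritten in these variables. Naturality: for every $\theta$ (in an extension algebra) with $\theta X\theta=0$ for all $X$, evaluating $\Psi$ at $((1+\theta)A_1(1-\theta),(1+\theta)A_2(1-\theta))$ gives $(1+\theta)\Psi(A_1,A_2)(1-\theta)$ componentwise. Transposition invariance: $\Psi^{\mathrm{opp}}=\Psi$, where $\Psi^{\mathrm{opp}}$ is obtained by evaluating the series of $\Psi$ at $(A_1,A_2)$ in the opposite algebra (all products, including those forming the split variables and the final multiplication by $Q_s$, taken in reversed order). Orthogonal invariance: with $t$ central, $t^2=0$, and $\mathrm{Rot}_t(B_1,B_2)=(B_1+tB_2,B_2-tB_1)$: $\mathrm{Rot}_t(\Psi_{(Q_1,Q_2)}(A_1,A_2))=\Psi_{\mathrm{Rot}_t(Q_1,Q_2)}(\mathrm{Rot}_t(A_1,A_2))$, the subscript indicating the base Clifford system. *)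

theory Defs
  imports "HOL-Computational_Algebra.Polynomial"
begin

text \<open>
  Model of the (completed) real algebra generated by a Clifford system Q1, Q2
  (Q1^2 = Q2^2 = -1, Q1 Q2 = - Q2 Q1) and free noncommuting formal infinitesimal
  letters.  The letters are R1, R2 (the infinitesimal variables) and Th (a further
  formal element used for naturality).  The subalgebra spanned by 1, Q1, Q2, Q1 Q2
  is the quaternions; since the letters are free, every element is uniquely a
  (possibly infinite) sum of terms  q_0 l_1 q_1 l_2 ... l_n q_n  with q_i among the
  basis 1, Q1, Q2, Q1Q2 (indices 0,1,2,3).  An element is thus the coefficient
  function on keys (letter word, basis-index list of length n+1).  All sums that
  occur are coefficientwise finite, so this is exactly the completion with respect
  to the number of letters.

  Coefficients are taken in real polynomials in a central variable t; elements of
  the algebra proper have constant coefficients.  The extension by a central t with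
  t^2 = 0 is obtained by comparing coefficients of t^0 and t^1 only.
\<close>

datatype letter = LR1 | LR2 | LTh

type_synonym elem = "letter list \<times> nat list \<Rightarrow> real poly"

definition valid_key :: "letter list \<times> nat list \<Rightarrow> bool" where
  "valid_key k \<longleftrightarrow> length (snd k) = Suc (length (fst k)) \<and> (\<forall>i\<in>set (snd k). i < 4)"

text \<open>Multiplication table of the basis 0 = 1, 1 = Q1, 2 = Q2, 3 = Q1 Q2:
  result (sign, index).\<close>
definition qmul :: "nat \<Rightarrow> nat \<Rightarrow> real \<times> nat" where
  "qmul i j =
    (if i = 0 then (1, j) else if j = 0 then (1, i) else if i = j then (-1, 0)
     else if i = 1 \<and> j = 2 then (1, 3) else if i = 2 \<and> j = 1 then (-1, 3)
     else if i = 1 \<and> j = 3 then (-1, 2) else if i = 3 \<and> j = 1 then (1, 2)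
     else if i = 2 \<and> j = 3 then (1, 1) else (-1, 1))"

definition emul :: "elem \<Rightarrow> elem \<Rightarrow> elem" where
  "emul x y = (\<lambda>(w, b). if valid_key (w, b) then
     (\<Sum>k\<le>length w. \<Sum>i<4. \<Sum>j<4.
        if snd (qmul i j) = b ! k
        then [:fst (qmul i j):] * x (take k w, take k b @ [i]) * y (drop k w, j # drop (Suc k) b)
        else 0)
     else 0)"

definition eadd :: "elem \<Rightarrow> elem \<Rightarrow> elem" where
  "eadd x y = (\<lambda>k. x k + y k)"

definition esub :: "elem \<Rightarrow> elem \<Rightarrow> elem" where
  "esub x y = (\<lambda>k. x k - y k)"

definition escale :: "real poly \<Rightarrow> elem \<Rightarrow> elem" where
  "escale c x = (\<lambda>k. c * x k)"

definition eone :: elem where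
  "eone = (\<lambda>(w, b). if w = [] \<and> b = [0] then 1 else 0)"

definition qbasis :: "nat \<Rightarrow> elem" where
  "qbasis i = (\<lambda>(w, b). if w = [] \<and> b = [i] then 1 else 0)"

definition egen :: "letter \<Rightarrow> elem" where
  "egen l = (\<lambda>(w, b). if w = [l] \<and> b = [0, 0] then 1 else 0)"

text \<open>Inverse of an element Q with Q^2 = -1 (elements of Clifford systems): Q^-1 = -Q.\<close>
definition einv :: "elem \<Rightarrow> elem" where
  "einv Q = escale (-1) Q"

text \<open>A formal real noncommutative power series in eight variables r_1..r_8:
  coefficient function on words; the letter k (0 \<le> k < 8) stands for r_(k+1).\<close>
type_synonym ncseries = "nat list \<Rightarrow> real"

text \<open>A vectorial FQ operation, identified with its pair of series (f_1, f_2).\<close>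
type_synonym fqop = "ncseries \<times> ncseries"

text \<open>Everything is parametrised by the multiplication m used (the ordinary one,
  or the reversed one for the opposite algebra).\<close>

definition qpart :: "(elem \<Rightarrow> elem \<Rightarrow> elem) \<Rightarrow> nat \<Rightarrow> elem \<Rightarrow> elem \<Rightarrow> elem" where
  "qpart m \<iota> Q X =
     escale [:1/2:] (if \<iota> = 0 then eadd X (m (m (einv Q) X) Q) else esub X (m (m (einv Q) X) Q))"

text \<open>split variables, 0-indexed: split_vars ... k = r_(k+1), with
  k = 4(j-1) + 2 iota1 + iota2.\<close>
definition split_vars ::
  "(elem \<Rightarrow> elem \<Rightarrow> elem) \<Rightarrow> elem \<Rightarrow> elem \<Rightarrow> elem \<Rightarrow> elem \<Rightarrow> nat \<Rightarrow> elem" where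
  "split_vars m Q1 Q2 A1 A2 k =
     (let Qj = (if k div 4 = 0 then Q1 else Q2);
          Aj = (if k div 4 = 0 then A1 else A2);
          Y = m (esub Aj Qj) (einv Qj)
      in qpart m (k mod 2) Q2 (qpart m ((k mod 4) div 2) Q1 Y))"

text \<open>Evaluation of a series at infinitesimal elements r (each term of each r k contains
  at least one letter, so only words u of length at most the number of letters of the key
  contribute to a coefficient: this is the exact formal infinite sum).\<close>
definition ser_eval :: "(elem \<Rightarrow> elem \<Rightarrow> elem) \<Rightarrow> ncseries \<Rightarrow> (nat \<Rightarrow> elem) \<Rightarrow> elem" where
  "ser_eval m f r = (\<lambda>(w, b).
     \<Sum>u\<in>{u. set u \<subseteq> {0..<8} \<and> length u \<le> length w}. [:f u:] * foldr m (map r u) eone (w, b))"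

definition psi_eval ::
  "(elem \<Rightarrow> elem \<Rightarrow> elem) \<Rightarrow> fqop \<Rightarrow> elem \<Rightarrow> elem \<Rightarrow> elem \<Rightarrow> elem \<Rightarrow> elem \<times> elem" where
  "psi_eval m \<Psi> Q1 Q2 A1 A2 =
     (let r = split_vars m Q1 Q2 A1 A2
      in (m (ser_eval m (fst \<Psi>) r) Q1, m (ser_eval m (snd \<Psi>) r) Q2))"

definition UQ1 :: elem where "UQ1 = qbasis 1"
definition UQ2 :: elem where "UQ2 = qbasis 2"
definition UA1 :: elem where "UA1 = eadd UQ1 (egen LR1)"
definition UA2 :: elem where "UA2 = eadd UQ2 (egen LR2)"

definition psi_apply :: "fqop \<Rightarrow> elem \<times> elem \<Rightarrow> elem \<times> elem" where
  "psi_apply \<Psi> B = psi_eval emul \<Psi> UQ1 UQ2 (fst B) (snd B)"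

definition clifford_conservative :: "fqop \<Rightarrow> bool" where
  "clifford_conservative \<Psi> \<longleftrightarrow> fst \<Psi> [] = 1 \<and> snd \<Psi> [] = 1"

text \<open>Naturality, with the universal theta: the letter Th modulo the relations
  theta X theta = 0 for all X, i.e. modulo all terms with at least two Th letters.\<close>
definition theta :: elem where "theta = egen LTh"

definition th_conj :: "elem \<Rightarrow> elem" where
  "th_conj X = emul (emul (eadd eone theta) X) (esub eone theta)"

definition trunc_th :: "elem \<Rightarrow> elem" where
  "trunc_th x = (\<lambda>(w, b). if length (filter (\<lambda>l. l = LTh) w) \<le> 1 then x (w, b) else 0)"

definition natural :: "fqop \<Rightarrow> bool" where
  "natural \<Psi> \<longleftrightarrow>
     (let B = psi_apply \<Psi> (UA1, UA2);
          C = psi_apply \<Psi> (th_conj UA1, th_conj UA2)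
      in trunc_th (fst C) = trunc_th (th_conj (fst B)) \<and>
         trunc_th (snd C) = trunc_th (th_conj (snd B)))"

text \<open>Transposition invariance: evaluation in the opposite algebra (all products reversed).\<close>
definition transposition_invariant :: "fqop \<Rightarrow> bool" where
  "transposition_invariant \<Psi> \<longleftrightarrow>
     psi_eval (\<lambda>x y. emul y x) \<Psi> UQ1 UQ2 UA1 UA2 = psi_eval emul \<Psi> UQ1 UQ2 UA1 UA2"

text \<open>Orthogonal invariance: central t (the polynomial variable) with t^2 = 0.\<close>
definition tvar :: "real poly" where "tvar = [:0, 1:]"

definition rot_t :: "elem \<times> elem \<Rightarrow> elem \<times> elem" where
  "rot_t B = (eadd (fst B) (escale tvar (snd B)), esub (snd B) (escale tvar (fst B)))"

definition eq_mod_t2 :: "elem \<Rightarrow> elem \<Rightarrow> bool" where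
  "eq_mod_t2 x y \<longleftrightarrow> (\<forall>k n. n \<le> 1 \<longrightarrow> coeff (x k) n = coeff (y k) n)"

definition orthogonally_invariant :: "fqop \<Rightarrow> bool" where
  "orthogonally_invariant \<Psi> \<longleftrightarrow>
     (let L = rot_t (psi_eval emul \<Psi> UQ1 UQ2 UA1 UA2);
          Q' = rot_t (UQ1, UQ2);
          A' = rot_t (UA1, UA2);
          R = psi_eval emul \<Psi> (fst Q') (snd Q') (fst A') (snd A')
      in eq_mod_t2 (fst L) (fst R) \<and> eq_mod_t2 (snd L) (snd R))"

text \<open>hat_r_k = sum_j hat_def k j * r_j (1-indexed), as in the paper.\<close>
definition hat_def :: "nat \<Rightarrow> nat \<Rightarrow> real" where
  "hat_def k j =
    (if k = 1 then (if j = 2 then 1/2 else if j = 7 then -1/2 else 0)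
     else if k = 2 then (if j = 2 then 1/2 else if j = 7 then 1/2 else 0)
     else if k = 3 then (if j = 1 then 1/2 else if j = 5 then 1/2 else 0)
     else if k = 4 then (if j = 1 then 1/2 else if j = 5 then -1/2 else 0)
     else if k = 5 then (if j = 4 then 1/2 else if j = 8 then -1/2 else 0)
     else if k = 6 then (if j = 4 then 1/2 else if j = 8 then 1/2 else 0)
     else if k = 7 then (if j = 3 then 1/2 else if j = 6 then 1/2 else 0)
     else if k = 8 then (if j = 3 then 1/2 else if j = 6 then -1/2 else 0)
     else 0)"

text \<open>Inverse change of variables: r_j = sum_k r_in_hat j k * hat_r_k.\<close>
definition r_in_hat :: "nat \<Rightarrow> nat \<Rightarrow> real" where
  "r_in_hat j k =
    (if j = 2 then (if k = 1 \<or> k = 2 then 1 else 0)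
     else if j = 7 then (if k = 2 then 1 else if k = 1 then -1 else 0)
     else if j = 1 then (if k = 3 \<or> k = 4 then 1 else 0)
     else if j = 5 then (if k = 3 then 1 else if k = 4 then -1 else 0)
     else if j = 4 then (if k = 5 \<or> k = 6 then 1 else 0)
     else if j = 8 then (if k = 6 then 1 else if k = 5 then -1 else 0)
     else if j = 3 then (if k = 7 \<or> k = 8 then 1 else 0)
     else if j = 6 then (if k = 7 then 1 else if k = 8 then -1 else 0)
     else 0)"


text \<open>Coefficient of hat_r_k (1 \<le> k \<le> 8) in the series f rewritten in the mixed variables:
  a word u (0-indexed letters) rewrites to a sum of hatted words of the same length.\<close>
definition mixed_coeff :: "ncseries \<Rightarrow> nat list \<Rightarrow> real" where
  "mixed_coeff f v = (\<Sum>u\<in>{u. set u \<subseteq> {0..<8} \<and> length u = length v}.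
      f u * (\<Prod>i<length v. r_in_hat (Suc (u ! i)) (Suc (v ! i))))"

definition hat_p :: "ncseries \<Rightarrow> nat \<Rightarrow> real" where
  "hat_p f k = mixed_coeff f [k - 1]"

end

theory Submission
  imports Defs
begin

definition S4 :: "(nat \<Rightarrow> real) \<Rightarrow> real" where "S4 f = f 0 + f 1 + f 2 + f 3"
lemma S4_cong [cong]: "S4 f = S4 f" by (rule refl)

lemma sum4: "(\<Sum>i<4. g i) = g 0 + g 1 + g 2 + g (3::nat)"
  by (simp add: eval_nat_numeral lessThan_Suc add_ac)

definition ev0 :: "real poly \<Rightarrow> real" where "ev0 p = coeff p 0"
definition ev1 :: "real poly \<Rightarrow> real" where "ev1 p = coeff p 1"

lemma ev0_mult: "ev0 (p * q) = ev0 p * ev0 q" by (simp add: ev0_def coeff_mult)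
lemma ev1_mult: "ev1 (p * q) = ev0 p * ev1 q + ev1 p * ev0 q"
  by (simp add: ev0_def ev1_def coeff_mult)
lemma ev0_sum: "ev0 (sum f A) = (\<Sum>a\<in>A. ev0 (f a))" by (simp add: ev0_def coeff_sum)
lemma ev1_sum: "ev1 (sum f A) = (\<Sum>a\<in>A. ev1 (f a))" by (simp add: ev1_def coeff_sum)
lemma ev_const[simp]: "ev0 [:c:] = c" "ev1 [:c:] = 0" by (simp_all add: ev0_def ev1_def)
lemma ev_add[simp]: "ev0 (p + q) = ev0 p + ev0 q" "ev1 (p + q) = ev1 p + ev1 q"
  "ev0 (p - q) = ev0 p - ev0 q" "ev1 (p - q) = ev1 p - ev1 q"
  by (simp_all add: ev0_def ev1_def)
lemma ev_01[simp]: "ev0 0 = 0" "ev1 0 = 0" "ev0 1 = 1" "ev1 1 = 0" by (simp_all add: ev0_def ev1_def)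
lemma ev_t[simp]: "ev0 tvar = 0" "ev1 tvar = 1" by (simp_all add: ev0_def ev1_def tvar_def)

lemma ev_neg[simp]: "ev0 (-p) = - ev0 p" "ev1 (-p) = - ev1 p" by (simp_all add: ev0_def ev1_def)
lemma ev_smult[simp]: "ev0 (smult c p) = c * ev0 p" "ev1 (smult c p) = c * ev1 p" by (simp_all add: ev0_def ev1_def)

definition Z0 :: "elem \<Rightarrow> nat \<Rightarrow> real" where "Z0 x i = ev0 (x ([],[i]))"
definition Z1 :: "elem \<Rightarrow> nat \<Rightarrow> real" where "Z1 x i = ev1 (x ([],[i]))"
definition V0 :: "elem \<Rightarrow> letter \<Rightarrow> nat \<Rightarrow> nat \<Rightarrow> real" where "V0 x l i j = ev0 (x ([l],[i,j]))"
definition V1 :: "elem \<Rightarrow> letter \<Rightarrow> nat \<Rightarrow> nat \<Rightarrow> real" where "V1 x l i j = ev1 (x ([l],[i,j]))"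

lemma sum_atMost01: "(\<Sum>k\<le>(0::nat). f k) = f 0" "(\<Sum>k\<le>Suc 0. f k) = f 0 + f (Suc 0)"
  by simp_all

lemma ev_if[simp]: "ev0 (if c then p else 0) = (if c then ev0 p else 0)" "ev1 (if c then p else 0) = (if c then ev1 p else 0)"
  by simp_all

lemma Z_emul': assumes "b < 4" shows
  "Z0 (emul x y) b =
   (\<Sum>i<4. \<Sum>j<4. if snd (qmul i j) = b then fst (qmul i j) * (Z0 x i * Z0 y j) else 0)"
  "Z1 (emul x y) b =
   (\<Sum>i<4. \<Sum>j<4. if snd (qmul i j) = b then fst (qmul i j) * (Z0 x i * Z1 y j + Z1 x i * Z0 y j) else 0)"
proof -
  have v: "valid_key ([], [b])" using assms by (simp add: valid_key_def)
  show "Z0 (emul x y) b =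
   (\<Sum>i<4. \<Sum>j<4. if snd (qmul i j) = b then fst (qmul i j) * (Z0 x i * Z0 y j) else 0)"
    unfolding emul_def Z0_def
    by (simp only: v split if_True prod.case ev0_sum ev_if ev0_mult ev_const sum_atMost01
        list.size take_0 drop_0 nth_Cons_0 drop_Suc_Cons append.simps mult.assoc)
  show "Z1 (emul x y) b =
   (\<Sum>i<4. \<Sum>j<4. if snd (qmul i j) = b then fst (qmul i j) * (Z0 x i * Z1 y j + Z1 x i * Z0 y j) else 0)"
    unfolding emul_def Z0_def Z1_def
    by (simp only: v split if_True prod.case ev1_sum ev_if ev1_mult ev0_mult ev_const sum_atMost01
        list.size take_0 drop_0 nth_Cons_0 drop_Suc_Cons append.simps mult_zero_left mult_zero_right
        add_0_left add_0_right distrib_left mult.assoc)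
qed

lemma V_emul': assumes "a < 4" "b < 4" shows
  "V0 (emul x y) l a b =
   (\<Sum>i<4. \<Sum>j<4. if snd (qmul i j) = a then fst (qmul i j) * (Z0 x i * V0 y l j b) else 0) +
   (\<Sum>i<4. \<Sum>j<4. if snd (qmul i j) = b then fst (qmul i j) * (V0 x l a i * Z0 y j) else 0)"
  "V1 (emul x y) l a b =
   (\<Sum>i<4. \<Sum>j<4. if snd (qmul i j) = a then fst (qmul i j) * (Z0 x i * V1 y l j b + Z1 x i * V0 y l j b) else 0) +
   (\<Sum>i<4. \<Sum>j<4. if snd (qmul i j) = b then fst (qmul i j) * (V0 x l a i * Z1 y j + V1 x l a i * Z0 y j) else 0)"
proof -
  have v: "valid_key ([l], [a, b])" using assms by (simp add: valid_key_def)
  show "V0 (emul x y) l a b =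
   (\<Sum>i<4. \<Sum>j<4. if snd (qmul i j) = a then fst (qmul i j) * (Z0 x i * V0 y l j b) else 0) +
   (\<Sum>i<4. \<Sum>j<4. if snd (qmul i j) = b then fst (qmul i j) * (V0 x l a i * Z0 y j) else 0)"
    unfolding emul_def Z0_def V0_def
    by (simp only: v split if_True prod.case ev0_sum ev_if ev0_mult ev_const sum_atMost01 sum.distrib ev_add
        list.size take_0 drop_0 nth_Cons_0 nth_Cons_Suc drop_Suc_Cons take_Suc_Cons append.simps mult.assoc
        add_0_left add_0_right One_nat_def)
  show "V1 (emul x y) l a b =
   (\<Sum>i<4. \<Sum>j<4. if snd (qmul i j) = a then fst (qmul i j) * (Z0 x i * V1 y l j b + Z1 x i * V0 y l j b) else 0) +
   (\<Sum>i<4. \<Sum>j<4. if snd (qmul i j) = b then fst (qmul i j) * (V0 x l a i * Z1 y j + V1 x l a i * Z0 y j) else 0)"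
    unfolding emul_def Z0_def V0_def Z1_def V1_def
    by (simp only: v split if_True prod.case ev1_sum ev_if ev1_mult ev0_mult ev_const sum_atMost01 sum.distrib ev_add
        list.size take_0 drop_0 nth_Cons_0 nth_Cons_Suc drop_Suc_Cons take_Suc_Cons append.simps mult.assoc
        mult_zero_left mult_zero_right add_0_left add_0_right distrib_left One_nat_def)
qed

lemma S_emulZ: assumes "b < 4" shows
  "Z0 (emul x y) b = S4 (\<lambda>i. S4 (\<lambda>j. if snd (qmul i j) = b then fst (qmul i j) * (Z0 x i * Z0 y j) else 0))"
  "Z1 (emul x y) b = S4 (\<lambda>i. S4 (\<lambda>j. if snd (qmul i j) = b then fst (qmul i j) * (Z0 x i * Z1 y j + Z1 x i * Z0 y j) else 0))"
  unfolding Z_emul'[OF assms] S4_def sum4 by (rule refl)+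

lemma S_emulV: assumes "a < 4" "b < 4" shows
  "V0 (emul x y) l a b =
   S4 (\<lambda>i. S4 (\<lambda>j. if snd (qmul i j) = a then fst (qmul i j) * (Z0 x i * V0 y l j b) else 0)) +
   S4 (\<lambda>i. S4 (\<lambda>j. if snd (qmul i j) = b then fst (qmul i j) * (V0 x l a i * Z0 y j) else 0))"
  "V1 (emul x y) l a b =
   S4 (\<lambda>i. S4 (\<lambda>j. if snd (qmul i j) = a then fst (qmul i j) * (Z0 x i * V1 y l j b + Z1 x i * V0 y l j b) else 0)) +
   S4 (\<lambda>i. S4 (\<lambda>j. if snd (qmul i j) = b then fst (qmul i j) * (V0 x l a i * Z1 y j + V1 x l a i * Z0 y j) else 0))"
  unfolding V_emul'[OF assms] S4_def sum4 by (rule refl)+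

lemma basics[simp]:
  "Z0 (eadd x y) i = Z0 x i + Z0 y i" "Z1 (eadd x y) i = Z1 x i + Z1 y i"
  "V0 (eadd x y) l a b = V0 x l a b + V0 y l a b" "V1 (eadd x y) l a b = V1 x l a b + V1 y l a b"
  "Z0 (esub x y) i = Z0 x i - Z0 y i" "Z1 (esub x y) i = Z1 x i - Z1 y i"
  "V0 (esub x y) l a b = V0 x l a b - V0 y l a b" "V1 (esub x y) l a b = V1 x l a b - V1 y l a b"
  "Z0 (escale c x) i = ev0 c * Z0 x i" "Z1 (escale c x) i = ev0 c * Z1 x i + ev1 c * Z0 x i"
  "V0 (escale c x) l a b = ev0 c * V0 x l a b" "V1 (escale c x) l a b = ev0 c * V1 x l a b + ev1 c * V0 x l a b"
  by (simp_all add: Z0_def Z1_def V0_def V1_def eadd_def esub_def escale_def ev0_mult ev1_mult)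

lemma einv_eq: "einv Q = escale (-1) Q" by (simp add: einv_def)

lemma ev_m1[simp]: "ev0 (-1) = -1" "ev1 (-1) = 0" "ev0 [:1/2:] = 1/2" "ev1 [:1/2:] = 0"
  by (simp_all add: ev0_def ev1_def)

lemma basis_vals[simp]:
  "Z0 (qbasis k) i = (if k = i then 1 else 0)" "Z1 (qbasis k) i = 0"
  "V0 (qbasis k) l a b = 0" "V1 (qbasis k) l a b = 0"
  "Z0 eone i = (if i = 0 then 1 else 0)" "Z1 eone i = 0"
  "V0 eone l a b = 0" "V1 eone l a b = 0"
  "Z0 (egen g) i = 0" "Z1 (egen g) i = 0"
  "V0 (egen g) l a b = (if l = g \<and> a = 0 \<and> b = 0 then 1 else 0)" "V1 (egen g) l a b = 0"
  by (auto simp: Z0_def Z1_def V0_def V1_def qbasis_def eone_def egen_def)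

lemma qmul_tab[simp]:
  "qmul 0 0 = (1,0)" "qmul 0 1 = (1,1)" "qmul 0 2 = (1,2)" "qmul 0 3 = (1,3)"
  "qmul 1 0 = (1,1)" "qmul 1 1 = (-1,0)" "qmul 1 2 = (1,3)" "qmul 1 3 = (-1,2)"
  "qmul 2 0 = (1,2)" "qmul 2 1 = (-1,3)" "qmul 2 2 = (-1,0)" "qmul 2 3 = (1,1)"
  "qmul 3 0 = (1,3)" "qmul 3 1 = (1,2)" "qmul 3 2 = (-1,1)" "qmul 3 3 = (-1,0)"
  by (simp_all add: qmul_def)

lemma qmul_tab2[simp]:
  "qmul 0 (Suc 0) = (1,1)" "qmul (Suc 0) 0 = (1,1)" "qmul (Suc 0) (Suc 0) = (-1,0)" "qmul (Suc 0) 2 = (1,3)" "qmul (Suc 0) 3 = (-1,2)"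
  "qmul 2 (Suc 0) = (-1,3)" "qmul 3 (Suc 0) = (1,2)"
  by (simp_all add: qmul_def)


lemmas EV = S_emulZ S_emulV S4_def einv_eq


definition S8 :: "(nat \<Rightarrow> real) \<Rightarrow> real" where "S8 f = f 0 + f 1 + f 2 + f 3 + f 4 + f 5 + f 6 + f 7"
lemma S8_cong [cong]: "S8 f = S8 f" by (rule refl)

lemma sum8: "(\<Sum>i<8. g i) = S8 g"
  by (simp add: S8_def eval_nat_numeral lessThan_Suc add_ac)

lemma words1: "{u. set u \<subseteq> {0..<8} \<and> length u \<le> Suc 0} = insert [] ((\<lambda>j. [j]) ` {..<(8::nat)})"
  by (auto simp: le_Suc_eq length_Suc_conv)
lemma words0: "{u. set u \<subseteq> {0..<8} \<and> length u \<le> 0} = {[]}"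
  by auto

lemma ser_Z: "Z0 (ser_eval m f r) i = f [] * Z0 eone i" "Z1 (ser_eval m f r) i = 0"
proof -
  have e: "ser_eval m f r ([], [i]) = [:f []:] * eone ([], [i])"
    unfolding ser_eval_def by (simp only: prod.case list.size words0 sum.insert sum.empty finite.emptyI empty_iff not_False_eq_True add_0_right foldr.simps list.map) simp
  show "Z0 (ser_eval m f r) i = f [] * Z0 eone i" "Z1 (ser_eval m f r) i = 0"
    unfolding Z0_def Z1_def e by (simp_all add: ev0_mult ev1_mult eone_def)
qed

lemma ser_V: "V0 (ser_eval m f r) l a b = S8 (\<lambda>j. f [j] * V0 (m (r j) eone) l a b)"
   "V1 (ser_eval m f r) l a b = S8 (\<lambda>j. f [j] * V1 (m (r j) eone) l a b)"
proof -
  have inj: "inj_on (\<lambda>j::nat. [j]) A" for A by (auto simp: inj_on_def)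
  have nm: "[] \<notin> (\<lambda>j::nat. [j]) ` A" for A by auto
  show "V0 (ser_eval m f r) l a b = S8 (\<lambda>j. f [j] * V0 (m (r j) eone) l a b)"
    unfolding ser_eval_def V0_def
    apply (simp only: prod.case list.size words1 add_0 One_nat_def)
    by (simp add: words1 ev0_sum sum.reindex[OF inj] nm ev0_mult eone_def sum8[symmetric])
  show "V1 (ser_eval m f r) l a b = S8 (\<lambda>j. f [j] * V1 (m (r j) eone) l a b)"
    unfolding ser_eval_def V1_def
    apply (simp only: prod.case list.size words1 add_0 One_nat_def)
    by (simp add: words1 ev1_sum sum.reindex[OF inj] nm ev1_mult ev0_mult eone_def sum8[symmetric])
qed

lemma UQ_vals[simp]: "Z0 UQ1 i = (if i = 1 then 1 else 0)" "Z0 UQ2 i = (if i = 2 then 1 else 0)"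
  "Z1 UQ1 i = 0" "Z1 UQ2 i = 0" "V0 UQ1 l a b = 0" "V0 UQ2 l a b = 0" "V1 UQ1 l a b = 0" "V1 UQ2 l a b = 0"
  by (auto simp: UQ1_def UQ2_def)

definition sw1 :: "nat \<Rightarrow> nat" where "sw1 a = (if a = 0 then 1 else if a = 1 then 0 else if a = 2 then 3 else 2)"
definition sw2 :: "nat \<Rightarrow> nat" where "sw2 a = (if a = 0 then 2 else if a = 1 then 3 else if a = 2 then 0 else 1)"
definition sg :: "real \<Rightarrow> real \<Rightarrow> real \<Rightarrow> real \<Rightarrow> nat \<Rightarrow> real" where
  "sg s0 s1 s2 s3 a = (if a = 0 then s0 else if a = 1 then s1 else if a = 2 then s2 else s3)"

lemma sw_vals[simp]: "sw1 0 = 1" "sw1 (Suc 0) = 0" "sw1 2 = 3" "sw1 3 = 2"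
  "sw2 0 = 2" "sw2 (Suc 0) = 3" "sw2 2 = 0" "sw2 3 = 1"
  "sg s0 s1 s2 s3 0 = s0" "sg s0 s1 s2 s3 (Suc 0) = s1" "sg s0 s1 s2 s3 2 = s2" "sg s0 s1 s2 s3 3 = s3"
  by (simp_all add: sw1_def sw2_def sg_def)

lemma lt4_cases: "(a::nat) < 4 \<Longrightarrow> a = 0 \<or> a = Suc 0 \<or> a = 2 \<or> a = 3" by auto

lemma conj1:
  assumes "a < 4" "b < 4"
  shows "V0 (emul (emul (einv UQ1) X) UQ1) l a b = sg 1 (-1) 1 (-1) a * sg (-1) 1 1 (-1) b * V0 X l (sw1 a) (sw1 b)"
    "V1 (emul (emul (einv UQ1) X) UQ1) l a b = sg 1 (-1) 1 (-1) a * sg (-1) 1 1 (-1) b * V1 X l (sw1 a) (sw1 b)"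
    "V0 (emul UQ1 (emul X (einv UQ1))) l a b = sg 1 (-1) 1 (-1) a * sg (-1) 1 1 (-1) b * V0 X l (sw1 a) (sw1 b)"
    "V1 (emul UQ1 (emul X (einv UQ1))) l a b = sg 1 (-1) 1 (-1) a * sg (-1) 1 1 (-1) b * V1 X l (sw1 a) (sw1 b)"
  using lt4_cases[OF assms(1)] lt4_cases[OF assms(2)] by (auto simp: EV)

lemma conj2:
  assumes "a < 4" "b < 4"
  shows "V0 (emul (emul (einv UQ2) X) UQ2) l a b = sg 1 (-1) (-1) 1 a * sg (-1) (-1) 1 1 b * V0 X l (sw2 a) (sw2 b)"
    "V1 (emul (emul (einv UQ2) X) UQ2) l a b = sg 1 (-1) (-1) 1 a * sg (-1) (-1) 1 1 b * V1 X l (sw2 a) (sw2 b)"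
    "V0 (emul UQ2 (emul X (einv UQ2))) l a b = sg 1 (-1) (-1) 1 a * sg (-1) (-1) 1 1 b * V0 X l (sw2 a) (sw2 b)"
    "V1 (emul UQ2 (emul X (einv UQ2))) l a b = sg 1 (-1) (-1) 1 a * sg (-1) (-1) 1 1 b * V1 X l (sw2 a) (sw2 b)"
  using lt4_cases[OF assms(1)] lt4_cases[OF assms(2)] by (auto simp: EV)

lemma sw_lt[simp]: "sw1 a < 4" "sw2 a < 4" by (simp_all add: sw1_def sw2_def)

lemma rmul:
  assumes "a < 4" "b < 4"
  shows "V0 (emul Z (einv UQ1)) l a b = sg 1 (-1) (-1) 1 b * V0 Z l a (sw1 b)"
    "V1 (emul Z (einv UQ1)) l a b = sg 1 (-1) (-1) 1 b * V1 Z l a (sw1 b)"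
    "V0 (emul Z (einv UQ2)) l a b = sg 1 1 (-1) (-1) b * V0 Z l a (sw2 b)"
    "V1 (emul Z (einv UQ2)) l a b = sg 1 1 (-1) (-1) b * V1 Z l a (sw2 b)"
    "V0 (emul (einv UQ1) Z) l a b = sg 1 (-1) 1 (-1) a * V0 Z l (sw1 a) b"
    "V1 (emul (einv UQ1) Z) l a b = sg 1 (-1) 1 (-1) a * V1 Z l (sw1 a) b"
    "V0 (emul (einv UQ2) Z) l a b = sg 1 (-1) (-1) 1 a * V0 Z l (sw2 a) b"
    "V1 (emul (einv UQ2) Z) l a b = sg 1 (-1) (-1) 1 a * V1 Z l (sw2 a) b"
    "V0 (emul Z UQ1) l a b = sg (-1) 1 1 (-1) b * V0 Z l a (sw1 b)"
    "V1 (emul Z UQ1) l a b = sg (-1) 1 1 (-1) b * V1 Z l a (sw1 b)"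
    "V0 (emul Z UQ2) l a b = sg (-1) (-1) 1 1 b * V0 Z l a (sw2 b)"
    "V1 (emul Z UQ2) l a b = sg (-1) (-1) 1 1 b * V1 Z l a (sw2 b)"
    "V0 (emul UQ1 Z) l a b = sg (-1) 1 (-1) 1 a * V0 Z l (sw1 a) b"
    "V1 (emul UQ1 Z) l a b = sg (-1) 1 (-1) 1 a * V1 Z l (sw1 a) b"
    "V0 (emul UQ2 Z) l a b = sg (-1) 1 1 (-1) a * V0 Z l (sw2 a) b"
    "V1 (emul UQ2 Z) l a b = sg (-1) 1 1 (-1) a * V1 Z l (sw2 a) b"
    "V0 (emul Z eone) l a b = V0 Z l a b" "V1 (emul Z eone) l a b = V1 Z l a b"
    "V0 (emul eone Z) l a b = V0 Z l a b" "V1 (emul eone Z) l a b = V1 Z l a b"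
  using lt4_cases[OF assms(1)] lt4_cases[OF assms(2)] by (auto simp: EV)

lemma UA_vals[simp]: "V0 UA1 l a b = (if l = LR1 \<and> a = 0 \<and> b = 0 then 1 else 0)"
  "V0 UA2 l a b = (if l = LR2 \<and> a = 0 \<and> b = 0 then 1 else 0)"
  "V1 UA1 l a b = 0" "V1 UA2 l a b = 0"
  "Z0 UA1 i = Z0 UQ1 i" "Z0 UA2 i = Z0 UQ2 i" "Z1 UA1 i = 0" "Z1 UA2 i = 0"
  by (simp_all add: UA1_def UA2_def)

lemma rmulZ: assumes "b < 4" shows
    "Z0 (emul Z UQ1) b = sg (-1) 1 1 (-1) b * Z0 Z (sw1 b)"
    "Z0 (emul Z UQ2) b = sg (-1) (-1) 1 1 b * Z0 Z (sw2 b)"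
    "Z1 (emul Z UQ1) b = sg (-1) 1 1 (-1) b * Z1 Z (sw1 b)"
    "Z1 (emul Z UQ2) b = sg (-1) (-1) 1 1 b * Z1 Z (sw2 b)"
  using lt4_cases[OF assms(1)] by (auto simp: EV)

lemmas CMP = conj1 conj2 rmul rmulZ split_vars_def qpart_def Let_def psi_eval_def ser_V S8_def

lemma theta_vals[simp]: "Z0 theta i = 0" "Z1 theta i = 0" "V0 theta l a b = (if l = LTh \<and> a = 0 \<and> b = 0 then 1 else 0)"
  "V1 theta l a b = 0"
  by (simp_all add: theta_def)

lemma thconj_V: assumes "a < 4" "b < 4"
  shows "V0 (th_conj X) LTh a b = V0 X LTh a b + (if a = 0 then Z0 X b else 0) - (if b = 0 then Z0 X a else 0)"
  unfolding th_conj_def using lt4_cases[OF assms(1)] lt4_cases[OF assms(2)] by (auto simp: EV)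

lemma trunc_V: "trunc_th x = trunc_th y \<Longrightarrow> V0 x LTh a b = V0 y LTh a b"
  by (drule fun_cong[of _ _ "([LTh],[a,b])"]) (simp add: trunc_th_def V0_def)

definition Q1r :: elem where "Q1r = eadd UQ1 (escale tvar UQ2)"
definition Q2r :: elem where "Q2r = esub UQ2 (escale tvar UQ1)"

lemma conjR1:
  "V0 (emul (emul (einv Q1r) X) Q1r) l 0 0 = (-1) * V0 X l (Suc 0) (Suc 0)"
  "V1 (emul (emul (einv Q1r) X) Q1r) l 0 0 = (-1) * V0 X l (Suc 0) 2 + (-1) * V0 X l 2 (Suc 0) + (-1) * V1 X l (Suc 0) (Suc 0)"
  "V0 (emul (emul (einv Q1r) X) Q1r) l 0 (Suc 0) = (1) * V0 X l (Suc 0) 0"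
  "V1 (emul (emul (einv Q1r) X) Q1r) l 0 (Suc 0) = (-1) * V0 X l (Suc 0) 3 + (1) * V0 X l 2 0 + (1) * V1 X l (Suc 0) 0"
  "V0 (emul (emul (einv Q1r) X) Q1r) l 0 2 = (1) * V0 X l (Suc 0) 3"
  "V1 (emul (emul (einv Q1r) X) Q1r) l 0 2 = (1) * V0 X l (Suc 0) 0 + (1) * V0 X l 2 3 + (1) * V1 X l (Suc 0) 3"
  "V0 (emul (emul (einv Q1r) X) Q1r) l 0 3 = (-1) * V0 X l (Suc 0) 2"
  "V1 (emul (emul (einv Q1r) X) Q1r) l 0 3 = (1) * V0 X l (Suc 0) (Suc 0) + (-1) * V0 X l 2 2 + (-1) * V1 X l (Suc 0) 2"
  "V0 (emul (emul (einv Q1r) X) Q1r) l (Suc 0) 0 = (1) * V0 X l 0 (Suc 0)"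
  "V1 (emul (emul (einv Q1r) X) Q1r) l (Suc 0) 0 = (1) * V0 X l 0 2 + (1) * V0 X l 3 (Suc 0) + (1) * V1 X l 0 (Suc 0)"
  "V0 (emul (emul (einv Q1r) X) Q1r) l (Suc 0) (Suc 0) = (-1) * V0 X l 0 0"
  "V1 (emul (emul (einv Q1r) X) Q1r) l (Suc 0) (Suc 0) = (1) * V0 X l 0 3 + (-1) * V0 X l 3 0 + (-1) * V1 X l 0 0"
  "V0 (emul (emul (einv Q1r) X) Q1r) l (Suc 0) 2 = (-1) * V0 X l 0 3"
  "V1 (emul (emul (einv Q1r) X) Q1r) l (Suc 0) 2 = (-1) * V0 X l 0 0 + (-1) * V0 X l 3 3 + (-1) * V1 X l 0 3"
  "V0 (emul (emul (einv Q1r) X) Q1r) l (Suc 0) 3 = (1) * V0 X l 0 2"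
  "V1 (emul (emul (einv Q1r) X) Q1r) l (Suc 0) 3 = (-1) * V0 X l 0 (Suc 0) + (1) * V0 X l 3 2 + (1) * V1 X l 0 2"
  "V0 (emul (emul (einv Q1r) X) Q1r) l 2 0 = (-1) * V0 X l 3 (Suc 0)"
  "V1 (emul (emul (einv Q1r) X) Q1r) l 2 0 = (1) * V0 X l 0 (Suc 0) + (-1) * V0 X l 3 2 + (-1) * V1 X l 3 (Suc 0)"
  "V0 (emul (emul (einv Q1r) X) Q1r) l 2 (Suc 0) = (1) * V0 X l 3 0"
  "V1 (emul (emul (einv Q1r) X) Q1r) l 2 (Suc 0) = (-1) * V0 X l 0 0 + (-1) * V0 X l 3 3 + (1) * V1 X l 3 0"
  "V0 (emul (emul (einv Q1r) X) Q1r) l 2 2 = (1) * V0 X l 3 3"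
  "V1 (emul (emul (einv Q1r) X) Q1r) l 2 2 = (-1) * V0 X l 0 3 + (1) * V0 X l 3 0 + (1) * V1 X l 3 3"
  "V0 (emul (emul (einv Q1r) X) Q1r) l 2 3 = (-1) * V0 X l 3 2"
  "V1 (emul (emul (einv Q1r) X) Q1r) l 2 3 = (1) * V0 X l 0 2 + (1) * V0 X l 3 (Suc 0) + (-1) * V1 X l 3 2"
  "V0 (emul (emul (einv Q1r) X) Q1r) l 3 0 = (1) * V0 X l 2 (Suc 0)"
  "V1 (emul (emul (einv Q1r) X) Q1r) l 3 0 = (-1) * V0 X l (Suc 0) (Suc 0) + (1) * V0 X l 2 2 + (1) * V1 X l 2 (Suc 0)"
  "V0 (emul (emul (einv Q1r) X) Q1r) l 3 (Suc 0) = (-1) * V0 X l 2 0"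
  "V1 (emul (emul (einv Q1r) X) Q1r) l 3 (Suc 0) = (1) * V0 X l (Suc 0) 0 + (1) * V0 X l 2 3 + (-1) * V1 X l 2 0"
  "V0 (emul (emul (einv Q1r) X) Q1r) l 3 2 = (-1) * V0 X l 2 3"
  "V1 (emul (emul (einv Q1r) X) Q1r) l 3 2 = (1) * V0 X l (Suc 0) 3 + (-1) * V0 X l 2 0 + (-1) * V1 X l 2 3"
  "V0 (emul (emul (einv Q1r) X) Q1r) l 3 3 = (1) * V0 X l 2 2"
  "V1 (emul (emul (einv Q1r) X) Q1r) l 3 3 = (-1) * V0 X l (Suc 0) 2 + (-1) * V0 X l 2 (Suc 0) + (1) * V1 X l 2 2"
  by (simp_all add: EV Q1r_def Q2r_def)

lemma conjR2:
  "V0 (emul (emul (einv Q2r) X) Q2r) l 0 0 = (-1) * V0 X l 2 2"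
  "V1 (emul (emul (einv Q2r) X) Q2r) l 0 0 = (1) * V0 X l (Suc 0) 2 + (1) * V0 X l 2 (Suc 0) + (-1) * V1 X l 2 2"
  "V0 (emul (emul (einv Q2r) X) Q2r) l 0 (Suc 0) = (-1) * V0 X l 2 3"
  "V1 (emul (emul (einv Q2r) X) Q2r) l 0 (Suc 0) = (1) * V0 X l (Suc 0) 3 + (-1) * V0 X l 2 0 + (-1) * V1 X l 2 3"
  "V0 (emul (emul (einv Q2r) X) Q2r) l 0 2 = (1) * V0 X l 2 0"
  "V1 (emul (emul (einv Q2r) X) Q2r) l 0 2 = (-1) * V0 X l (Suc 0) 0 + (-1) * V0 X l 2 3 + (1) * V1 X l 2 0"
  "V0 (emul (emul (einv Q2r) X) Q2r) l 0 3 = (1) * V0 X l 2 (Suc 0)"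
  "V1 (emul (emul (einv Q2r) X) Q2r) l 0 3 = (-1) * V0 X l (Suc 0) (Suc 0) + (1) * V0 X l 2 2 + (1) * V1 X l 2 (Suc 0)"
  "V0 (emul (emul (einv Q2r) X) Q2r) l (Suc 0) 0 = (1) * V0 X l 3 2"
  "V1 (emul (emul (einv Q2r) X) Q2r) l (Suc 0) 0 = (-1) * V0 X l 0 2 + (-1) * V0 X l 3 (Suc 0) + (1) * V1 X l 3 2"
  "V0 (emul (emul (einv Q2r) X) Q2r) l (Suc 0) (Suc 0) = (1) * V0 X l 3 3"
  "V1 (emul (emul (einv Q2r) X) Q2r) l (Suc 0) (Suc 0) = (-1) * V0 X l 0 3 + (1) * V0 X l 3 0 + (1) * V1 X l 3 3"
  "V0 (emul (emul (einv Q2r) X) Q2r) l (Suc 0) 2 = (-1) * V0 X l 3 0"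
  "V1 (emul (emul (einv Q2r) X) Q2r) l (Suc 0) 2 = (1) * V0 X l 0 0 + (1) * V0 X l 3 3 + (-1) * V1 X l 3 0"
  "V0 (emul (emul (einv Q2r) X) Q2r) l (Suc 0) 3 = (-1) * V0 X l 3 (Suc 0)"
  "V1 (emul (emul (einv Q2r) X) Q2r) l (Suc 0) 3 = (1) * V0 X l 0 (Suc 0) + (-1) * V0 X l 3 2 + (-1) * V1 X l 3 (Suc 0)"
  "V0 (emul (emul (einv Q2r) X) Q2r) l 2 0 = (1) * V0 X l 0 2"
  "V1 (emul (emul (einv Q2r) X) Q2r) l 2 0 = (-1) * V0 X l 0 (Suc 0) + (1) * V0 X l 3 2 + (1) * V1 X l 0 2"
  "V0 (emul (emul (einv Q2r) X) Q2r) l 2 (Suc 0) = (1) * V0 X l 0 3"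
  "V1 (emul (emul (einv Q2r) X) Q2r) l 2 (Suc 0) = (1) * V0 X l 0 0 + (1) * V0 X l 3 3 + (1) * V1 X l 0 3"
  "V0 (emul (emul (einv Q2r) X) Q2r) l 2 2 = (-1) * V0 X l 0 0"
  "V1 (emul (emul (einv Q2r) X) Q2r) l 2 2 = (1) * V0 X l 0 3 + (-1) * V0 X l 3 0 + (-1) * V1 X l 0 0"
  "V0 (emul (emul (einv Q2r) X) Q2r) l 2 3 = (-1) * V0 X l 0 (Suc 0)"
  "V1 (emul (emul (einv Q2r) X) Q2r) l 2 3 = (-1) * V0 X l 0 2 + (-1) * V0 X l 3 (Suc 0) + (-1) * V1 X l 0 (Suc 0)"
  "V0 (emul (emul (einv Q2r) X) Q2r) l 3 0 = (-1) * V0 X l (Suc 0) 2"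
  "V1 (emul (emul (einv Q2r) X) Q2r) l 3 0 = (1) * V0 X l (Suc 0) (Suc 0) + (-1) * V0 X l 2 2 + (-1) * V1 X l (Suc 0) 2"
  "V0 (emul (emul (einv Q2r) X) Q2r) l 3 (Suc 0) = (-1) * V0 X l (Suc 0) 3"
  "V1 (emul (emul (einv Q2r) X) Q2r) l 3 (Suc 0) = (-1) * V0 X l (Suc 0) 0 + (-1) * V0 X l 2 3 + (-1) * V1 X l (Suc 0) 3"
  "V0 (emul (emul (einv Q2r) X) Q2r) l 3 2 = (1) * V0 X l (Suc 0) 0"
  "V1 (emul (emul (einv Q2r) X) Q2r) l 3 2 = (-1) * V0 X l (Suc 0) 3 + (1) * V0 X l 2 0 + (1) * V1 X l (Suc 0) 0"
  "V0 (emul (emul (einv Q2r) X) Q2r) l 3 3 = (1) * V0 X l (Suc 0) (Suc 0)"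
  "V1 (emul (emul (einv Q2r) X) Q2r) l 3 3 = (1) * V0 X l (Suc 0) 2 + (1) * V0 X l 2 (Suc 0) + (1) * V1 X l (Suc 0) (Suc 0)"
  by (simp_all add: EV Q1r_def Q2r_def)

lemma rmR1:
  "V0 (emul X (einv Q1r)) l 0 0 = (1) * V0 X l 0 (Suc 0)"
  "V1 (emul X (einv Q1r)) l 0 0 = (1) * V0 X l 0 2 + (1) * V1 X l 0 (Suc 0)"
  "V0 (emul X (einv Q1r)) l 0 (Suc 0) = (-1) * V0 X l 0 0"
  "V1 (emul X (einv Q1r)) l 0 (Suc 0) = (1) * V0 X l 0 3 + (-1) * V1 X l 0 0"
  "V0 (emul X (einv Q1r)) l 0 2 = (-1) * V0 X l 0 3"
  "V1 (emul X (einv Q1r)) l 0 2 = (-1) * V0 X l 0 0 + (-1) * V1 X l 0 3"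
  "V0 (emul X (einv Q1r)) l 0 3 = (1) * V0 X l 0 2"
  "V1 (emul X (einv Q1r)) l 0 3 = (-1) * V0 X l 0 (Suc 0) + (1) * V1 X l 0 2"
  "V0 (emul X (einv Q1r)) l (Suc 0) 0 = (1) * V0 X l (Suc 0) (Suc 0)"
  "V1 (emul X (einv Q1r)) l (Suc 0) 0 = (1) * V0 X l (Suc 0) 2 + (1) * V1 X l (Suc 0) (Suc 0)"
  "V0 (emul X (einv Q1r)) l (Suc 0) (Suc 0) = (-1) * V0 X l (Suc 0) 0"
  "V1 (emul X (einv Q1r)) l (Suc 0) (Suc 0) = (1) * V0 X l (Suc 0) 3 + (-1) * V1 X l (Suc 0) 0"
  "V0 (emul X (einv Q1r)) l (Suc 0) 2 = (-1) * V0 X l (Suc 0) 3"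
  "V1 (emul X (einv Q1r)) l (Suc 0) 2 = (-1) * V0 X l (Suc 0) 0 + (-1) * V1 X l (Suc 0) 3"
  "V0 (emul X (einv Q1r)) l (Suc 0) 3 = (1) * V0 X l (Suc 0) 2"
  "V1 (emul X (einv Q1r)) l (Suc 0) 3 = (-1) * V0 X l (Suc 0) (Suc 0) + (1) * V1 X l (Suc 0) 2"
  "V0 (emul X (einv Q1r)) l 2 0 = (1) * V0 X l 2 (Suc 0)"
  "V1 (emul X (einv Q1r)) l 2 0 = (1) * V0 X l 2 2 + (1) * V1 X l 2 (Suc 0)"
  "V0 (emul X (einv Q1r)) l 2 (Suc 0) = (-1) * V0 X l 2 0"
  "V1 (emul X (einv Q1r)) l 2 (Suc 0) = (1) * V0 X l 2 3 + (-1) * V1 X l 2 0"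
  "V0 (emul X (einv Q1r)) l 2 2 = (-1) * V0 X l 2 3"
  "V1 (emul X (einv Q1r)) l 2 2 = (-1) * V0 X l 2 0 + (-1) * V1 X l 2 3"
  "V0 (emul X (einv Q1r)) l 2 3 = (1) * V0 X l 2 2"
  "V1 (emul X (einv Q1r)) l 2 3 = (-1) * V0 X l 2 (Suc 0) + (1) * V1 X l 2 2"
  "V0 (emul X (einv Q1r)) l 3 0 = (1) * V0 X l 3 (Suc 0)"
  "V1 (emul X (einv Q1r)) l 3 0 = (1) * V0 X l 3 2 + (1) * V1 X l 3 (Suc 0)"
  "V0 (emul X (einv Q1r)) l 3 (Suc 0) = (-1) * V0 X l 3 0"
  "V1 (emul X (einv Q1r)) l 3 (Suc 0) = (1) * V0 X l 3 3 + (-1) * V1 X l 3 0"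
  "V0 (emul X (einv Q1r)) l 3 2 = (-1) * V0 X l 3 3"
  "V1 (emul X (einv Q1r)) l 3 2 = (-1) * V0 X l 3 0 + (-1) * V1 X l 3 3"
  "V0 (emul X (einv Q1r)) l 3 3 = (1) * V0 X l 3 2"
  "V1 (emul X (einv Q1r)) l 3 3 = (-1) * V0 X l 3 (Suc 0) + (1) * V1 X l 3 2"
  by (simp_all add: EV Q1r_def Q2r_def)

lemma rmR2:
  "V0 (emul X (einv Q2r)) l 0 0 = (1) * V0 X l 0 2"
  "V1 (emul X (einv Q2r)) l 0 0 = (-1) * V0 X l 0 (Suc 0) + (1) * V1 X l 0 2"
  "V0 (emul X (einv Q2r)) l 0 (Suc 0) = (1) * V0 X l 0 3"
  "V1 (emul X (einv Q2r)) l 0 (Suc 0) = (1) * V0 X l 0 0 + (1) * V1 X l 0 3"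
  "V0 (emul X (einv Q2r)) l 0 2 = (-1) * V0 X l 0 0"
  "V1 (emul X (einv Q2r)) l 0 2 = (1) * V0 X l 0 3 + (-1) * V1 X l 0 0"
  "V0 (emul X (einv Q2r)) l 0 3 = (-1) * V0 X l 0 (Suc 0)"
  "V1 (emul X (einv Q2r)) l 0 3 = (-1) * V0 X l 0 2 + (-1) * V1 X l 0 (Suc 0)"
  "V0 (emul X (einv Q2r)) l (Suc 0) 0 = (1) * V0 X l (Suc 0) 2"
  "V1 (emul X (einv Q2r)) l (Suc 0) 0 = (-1) * V0 X l (Suc 0) (Suc 0) + (1) * V1 X l (Suc 0) 2"
  "V0 (emul X (einv Q2r)) l (Suc 0) (Suc 0) = (1) * V0 X l (Suc 0) 3"
  "V1 (emul X (einv Q2r)) l (Suc 0) (Suc 0) = (1) * V0 X l (Suc 0) 0 + (1) * V1 X l (Suc 0) 3"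
  "V0 (emul X (einv Q2r)) l (Suc 0) 2 = (-1) * V0 X l (Suc 0) 0"
  "V1 (emul X (einv Q2r)) l (Suc 0) 2 = (1) * V0 X l (Suc 0) 3 + (-1) * V1 X l (Suc 0) 0"
  "V0 (emul X (einv Q2r)) l (Suc 0) 3 = (-1) * V0 X l (Suc 0) (Suc 0)"
  "V1 (emul X (einv Q2r)) l (Suc 0) 3 = (-1) * V0 X l (Suc 0) 2 + (-1) * V1 X l (Suc 0) (Suc 0)"
  "V0 (emul X (einv Q2r)) l 2 0 = (1) * V0 X l 2 2"
  "V1 (emul X (einv Q2r)) l 2 0 = (-1) * V0 X l 2 (Suc 0) + (1) * V1 X l 2 2"
  "V0 (emul X (einv Q2r)) l 2 (Suc 0) = (1) * V0 X l 2 3"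
  "V1 (emul X (einv Q2r)) l 2 (Suc 0) = (1) * V0 X l 2 0 + (1) * V1 X l 2 3"
  "V0 (emul X (einv Q2r)) l 2 2 = (-1) * V0 X l 2 0"
  "V1 (emul X (einv Q2r)) l 2 2 = (1) * V0 X l 2 3 + (-1) * V1 X l 2 0"
  "V0 (emul X (einv Q2r)) l 2 3 = (-1) * V0 X l 2 (Suc 0)"
  "V1 (emul X (einv Q2r)) l 2 3 = (-1) * V0 X l 2 2 + (-1) * V1 X l 2 (Suc 0)"
  "V0 (emul X (einv Q2r)) l 3 0 = (1) * V0 X l 3 2"
  "V1 (emul X (einv Q2r)) l 3 0 = (-1) * V0 X l 3 (Suc 0) + (1) * V1 X l 3 2"
  "V0 (emul X (einv Q2r)) l 3 (Suc 0) = (1) * V0 X l 3 3"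
  "V1 (emul X (einv Q2r)) l 3 (Suc 0) = (1) * V0 X l 3 0 + (1) * V1 X l 3 3"
  "V0 (emul X (einv Q2r)) l 3 2 = (-1) * V0 X l 3 0"
  "V1 (emul X (einv Q2r)) l 3 2 = (1) * V0 X l 3 3 + (-1) * V1 X l 3 0"
  "V0 (emul X (einv Q2r)) l 3 3 = (-1) * V0 X l 3 (Suc 0)"
  "V1 (emul X (einv Q2r)) l 3 3 = (-1) * V0 X l 3 2 + (-1) * V1 X l 3 (Suc 0)"
  by (simp_all add: EV Q1r_def Q2r_def)

lemma rqR1:
  "V0 (emul (ser_eval m f r) Q1r) l 0 0 = (-1) * V0 (ser_eval m f r) l 0 (Suc 0)"
  "V1 (emul (ser_eval m f r) Q1r) l 0 0 = (-1) * V0 (ser_eval m f r) l 0 2 + (-1) * V1 (ser_eval m f r) l 0 (Suc 0)"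
  "V0 (emul (ser_eval m f r) Q1r) l 0 (Suc 0) = (1) * V0 (ser_eval m f r) l 0 0"
  "V1 (emul (ser_eval m f r) Q1r) l 0 (Suc 0) = (-1) * V0 (ser_eval m f r) l 0 3 + (1) * V1 (ser_eval m f r) l 0 0"
  "V0 (emul (ser_eval m f r) Q1r) l 0 2 = (1) * V0 (ser_eval m f r) l 0 3"
  "V1 (emul (ser_eval m f r) Q1r) l 0 2 = (1) * V0 (ser_eval m f r) l 0 0 + (1) * V1 (ser_eval m f r) l 0 3"
  "V0 (emul (ser_eval m f r) Q1r) l 0 3 = (-1) * V0 (ser_eval m f r) l 0 2"
  "V1 (emul (ser_eval m f r) Q1r) l 0 3 = (1) * V0 (ser_eval m f r) l 0 (Suc 0) + (-1) * V1 (ser_eval m f r) l 0 2"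
  "V0 (emul (ser_eval m f r) Q1r) l (Suc 0) 0 = (-1) * V0 (ser_eval m f r) l (Suc 0) (Suc 0)"
  "V1 (emul (ser_eval m f r) Q1r) l (Suc 0) 0 = (-1) * V0 (ser_eval m f r) l (Suc 0) 2 + (-1) * V1 (ser_eval m f r) l (Suc 0) (Suc 0)"
  "V0 (emul (ser_eval m f r) Q1r) l (Suc 0) (Suc 0) = (1) * V0 (ser_eval m f r) l (Suc 0) 0"
  "V1 (emul (ser_eval m f r) Q1r) l (Suc 0) (Suc 0) = (-1) * V0 (ser_eval m f r) l (Suc 0) 3 + (1) * V1 (ser_eval m f r) l (Suc 0) 0"
  "V0 (emul (ser_eval m f r) Q1r) l (Suc 0) 2 = (1) * V0 (ser_eval m f r) l (Suc 0) 3"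
  "V1 (emul (ser_eval m f r) Q1r) l (Suc 0) 2 = (1) * V0 (ser_eval m f r) l (Suc 0) 0 + (1) * V1 (ser_eval m f r) l (Suc 0) 3"
  "V0 (emul (ser_eval m f r) Q1r) l (Suc 0) 3 = (-1) * V0 (ser_eval m f r) l (Suc 0) 2"
  "V1 (emul (ser_eval m f r) Q1r) l (Suc 0) 3 = (1) * V0 (ser_eval m f r) l (Suc 0) (Suc 0) + (-1) * V1 (ser_eval m f r) l (Suc 0) 2"
  "V0 (emul (ser_eval m f r) Q1r) l 2 0 = (-1) * V0 (ser_eval m f r) l 2 (Suc 0)"
  "V1 (emul (ser_eval m f r) Q1r) l 2 0 = (-1) * V0 (ser_eval m f r) l 2 2 + (-1) * V1 (ser_eval m f r) l 2 (Suc 0)"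
  "V0 (emul (ser_eval m f r) Q1r) l 2 (Suc 0) = (1) * V0 (ser_eval m f r) l 2 0"
  "V1 (emul (ser_eval m f r) Q1r) l 2 (Suc 0) = (-1) * V0 (ser_eval m f r) l 2 3 + (1) * V1 (ser_eval m f r) l 2 0"
  "V0 (emul (ser_eval m f r) Q1r) l 2 2 = (1) * V0 (ser_eval m f r) l 2 3"
  "V1 (emul (ser_eval m f r) Q1r) l 2 2 = (1) * V0 (ser_eval m f r) l 2 0 + (1) * V1 (ser_eval m f r) l 2 3"
  "V0 (emul (ser_eval m f r) Q1r) l 2 3 = (-1) * V0 (ser_eval m f r) l 2 2"
  "V1 (emul (ser_eval m f r) Q1r) l 2 3 = (1) * V0 (ser_eval m f r) l 2 (Suc 0) + (-1) * V1 (ser_eval m f r) l 2 2"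
  "V0 (emul (ser_eval m f r) Q1r) l 3 0 = (-1) * V0 (ser_eval m f r) l 3 (Suc 0)"
  "V1 (emul (ser_eval m f r) Q1r) l 3 0 = (-1) * V0 (ser_eval m f r) l 3 2 + (-1) * V1 (ser_eval m f r) l 3 (Suc 0)"
  "V0 (emul (ser_eval m f r) Q1r) l 3 (Suc 0) = (1) * V0 (ser_eval m f r) l 3 0"
  "V1 (emul (ser_eval m f r) Q1r) l 3 (Suc 0) = (-1) * V0 (ser_eval m f r) l 3 3 + (1) * V1 (ser_eval m f r) l 3 0"
  "V0 (emul (ser_eval m f r) Q1r) l 3 2 = (1) * V0 (ser_eval m f r) l 3 3"
  "V1 (emul (ser_eval m f r) Q1r) l 3 2 = (1) * V0 (ser_eval m f r) l 3 0 + (1) * V1 (ser_eval m f r) l 3 3"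
  "V0 (emul (ser_eval m f r) Q1r) l 3 3 = (-1) * V0 (ser_eval m f r) l 3 2"
  "V1 (emul (ser_eval m f r) Q1r) l 3 3 = (1) * V0 (ser_eval m f r) l 3 (Suc 0) + (-1) * V1 (ser_eval m f r) l 3 2"
  by (simp_all add: EV Q1r_def Q2r_def)

lemma rqR2:
  "V0 (emul (ser_eval m f r) Q2r) l 0 0 = (-1) * V0 (ser_eval m f r) l 0 2"
  "V1 (emul (ser_eval m f r) Q2r) l 0 0 = (1) * V0 (ser_eval m f r) l 0 (Suc 0) + (-1) * V1 (ser_eval m f r) l 0 2"
  "V0 (emul (ser_eval m f r) Q2r) l 0 (Suc 0) = (-1) * V0 (ser_eval m f r) l 0 3"
  "V1 (emul (ser_eval m f r) Q2r) l 0 (Suc 0) = (-1) * V0 (ser_eval m f r) l 0 0 + (-1) * V1 (ser_eval m f r) l 0 3"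
  "V0 (emul (ser_eval m f r) Q2r) l 0 2 = (1) * V0 (ser_eval m f r) l 0 0"
  "V1 (emul (ser_eval m f r) Q2r) l 0 2 = (-1) * V0 (ser_eval m f r) l 0 3 + (1) * V1 (ser_eval m f r) l 0 0"
  "V0 (emul (ser_eval m f r) Q2r) l 0 3 = (1) * V0 (ser_eval m f r) l 0 (Suc 0)"
  "V1 (emul (ser_eval m f r) Q2r) l 0 3 = (1) * V0 (ser_eval m f r) l 0 2 + (1) * V1 (ser_eval m f r) l 0 (Suc 0)"
  "V0 (emul (ser_eval m f r) Q2r) l (Suc 0) 0 = (-1) * V0 (ser_eval m f r) l (Suc 0) 2"
  "V1 (emul (ser_eval m f r) Q2r) l (Suc 0) 0 = (1) * V0 (ser_eval m f r) l (Suc 0) (Suc 0) + (-1) * V1 (ser_eval m f r) l (Suc 0) 2"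
  "V0 (emul (ser_eval m f r) Q2r) l (Suc 0) (Suc 0) = (-1) * V0 (ser_eval m f r) l (Suc 0) 3"
  "V1 (emul (ser_eval m f r) Q2r) l (Suc 0) (Suc 0) = (-1) * V0 (ser_eval m f r) l (Suc 0) 0 + (-1) * V1 (ser_eval m f r) l (Suc 0) 3"
  "V0 (emul (ser_eval m f r) Q2r) l (Suc 0) 2 = (1) * V0 (ser_eval m f r) l (Suc 0) 0"
  "V1 (emul (ser_eval m f r) Q2r) l (Suc 0) 2 = (-1) * V0 (ser_eval m f r) l (Suc 0) 3 + (1) * V1 (ser_eval m f r) l (Suc 0) 0"
  "V0 (emul (ser_eval m f r) Q2r) l (Suc 0) 3 = (1) * V0 (ser_eval m f r) l (Suc 0) (Suc 0)"
  "V1 (emul (ser_eval m f r) Q2r) l (Suc 0) 3 = (1) * V0 (ser_eval m f r) l (Suc 0) 2 + (1) * V1 (ser_eval m f r) l (Suc 0) (Suc 0)"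
  "V0 (emul (ser_eval m f r) Q2r) l 2 0 = (-1) * V0 (ser_eval m f r) l 2 2"
  "V1 (emul (ser_eval m f r) Q2r) l 2 0 = (1) * V0 (ser_eval m f r) l 2 (Suc 0) + (-1) * V1 (ser_eval m f r) l 2 2"
  "V0 (emul (ser_eval m f r) Q2r) l 2 (Suc 0) = (-1) * V0 (ser_eval m f r) l 2 3"
  "V1 (emul (ser_eval m f r) Q2r) l 2 (Suc 0) = (-1) * V0 (ser_eval m f r) l 2 0 + (-1) * V1 (ser_eval m f r) l 2 3"
  "V0 (emul (ser_eval m f r) Q2r) l 2 2 = (1) * V0 (ser_eval m f r) l 2 0"
  "V1 (emul (ser_eval m f r) Q2r) l 2 2 = (-1) * V0 (ser_eval m f r) l 2 3 + (1) * V1 (ser_eval m f r) l 2 0"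
  "V0 (emul (ser_eval m f r) Q2r) l 2 3 = (1) * V0 (ser_eval m f r) l 2 (Suc 0)"
  "V1 (emul (ser_eval m f r) Q2r) l 2 3 = (1) * V0 (ser_eval m f r) l 2 2 + (1) * V1 (ser_eval m f r) l 2 (Suc 0)"
  "V0 (emul (ser_eval m f r) Q2r) l 3 0 = (-1) * V0 (ser_eval m f r) l 3 2"
  "V1 (emul (ser_eval m f r) Q2r) l 3 0 = (1) * V0 (ser_eval m f r) l 3 (Suc 0) + (-1) * V1 (ser_eval m f r) l 3 2"
  "V0 (emul (ser_eval m f r) Q2r) l 3 (Suc 0) = (-1) * V0 (ser_eval m f r) l 3 3"
  "V1 (emul (ser_eval m f r) Q2r) l 3 (Suc 0) = (-1) * V0 (ser_eval m f r) l 3 0 + (-1) * V1 (ser_eval m f r) l 3 3"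
  "V0 (emul (ser_eval m f r) Q2r) l 3 2 = (1) * V0 (ser_eval m f r) l 3 0"
  "V1 (emul (ser_eval m f r) Q2r) l 3 2 = (-1) * V0 (ser_eval m f r) l 3 3 + (1) * V1 (ser_eval m f r) l 3 0"
  "V0 (emul (ser_eval m f r) Q2r) l 3 3 = (1) * V0 (ser_eval m f r) l 3 (Suc 0)"
  "V1 (emul (ser_eval m f r) Q2r) l 3 3 = (1) * V0 (ser_eval m f r) l 3 2 + (1) * V1 (ser_eval m f r) l 3 (Suc 0)"
  by (simp_all add: EV Q1r_def Q2r_def)


definition A1r :: elem where "A1r = eadd UA1 (escale tvar UA2)"
definition A2r :: elem where "A2r = esub UA2 (escale tvar UA1)"

lemma rot_vals[simp]: "V0 Q1r l a b = 0" "V1 Q1r l a b = 0" "V0 Q2r l a b = 0" "V1 Q2r l a b = 0"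
  "V0 A1r l a b = V0 UA1 l a b" "V1 A1r l a b = V0 UA2 l a b"
  "V0 A2r l a b = V0 UA2 l a b" "V1 A2r l a b = - V0 UA1 l a b"
  by (simp_all add: Q1r_def Q2r_def A1r_def A2r_def)

lemmas ROT = conjR1 conjR2 rmR1 rmR2 rqR1 rqR2

definition cons :: "fqop \<Rightarrow> bool" where
 "cons \<Psi> \<longleftrightarrow> fst \<Psi> [2] = 1 \<and> fst \<Psi> [5] = 0 \<and> fst \<Psi> [6] = 0 \<and>
   fst \<Psi> [4] = fst \<Psi> [0] - 2 * fst \<Psi> [3] + 1 \<and> fst \<Psi> [7] = 1 - fst \<Psi> [3] \<and>
   snd \<Psi> [0] = fst \<Psi> [0] - 2 * fst \<Psi> [3] + 1 \<and> snd \<Psi> [Suc 0] = 0 \<and> snd \<Psi> [2] = 0 \<and>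
   snd \<Psi> [3] = 1 - fst \<Psi> [3] \<and> snd \<Psi> [4] = fst \<Psi> [0] \<and> snd \<Psi> [5] = 1 \<and>
   snd \<Psi> [6] = fst \<Psi> [Suc 0] \<and> snd \<Psi> [7] = fst \<Psi> [3]"

lemma cons_D: assumes "cons \<Psi>" shows "fst \<Psi> [2] = 1" "fst \<Psi> [5] = 0" "fst \<Psi> [6] = 0"
   "fst \<Psi> [4] = fst \<Psi> [0] - 2 * fst \<Psi> [3] + 1" "fst \<Psi> [7] = 1 - fst \<Psi> [3]"
   "snd \<Psi> [0] = fst \<Psi> [0] - 2 * fst \<Psi> [3] + 1" "snd \<Psi> [Suc 0] = 0" "snd \<Psi> [2] = 0"
   "snd \<Psi> [3] = 1 - fst \<Psi> [3]" "snd \<Psi> [4] = fst \<Psi> [0]" "snd \<Psi> [5] = 1"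
   "snd \<Psi> [6] = fst \<Psi> [Suc 0]" "snd \<Psi> [7] = fst \<Psi> [3]"
  using assms by (simp_all add: cons_def)

lemma block: assumes "cons \<Psi>" shows
  "V0 (fst (psi_apply \<Psi> B)) LR1 0 0 = (1/4) * fst \<Psi> [0] * V0 (fst B) LR1 0 0 + (-1/4) * fst \<Psi> [0] * V0 (fst B) LR1 (Suc 0) (Suc 0) + (1/4) * fst \<Psi> [0] * V0 (fst B) LR1 2 2 + (1/4) * fst \<Psi> [0] * V0 (fst B) LR1 3 3 + (-1/4) * fst \<Psi> [0] * V0 (snd B) LR1 0 3 + (-1/4) * fst \<Psi> [0] * V0 (snd B) LR1 (Suc 0) 2 + (-1/4) * fst \<Psi> [0] * V0 (snd B) LR1 2 (Suc 0) + (1/4) * fst \<Psi> [0] * V0 (snd B) LR1 3 0 + (1/4) * fst \<Psi> [Suc 0] * V0 (fst B) LR1 0 0 + (-1/4) * fst \<Psi> [Suc 0] * V0 (fst B) LR1 (Suc 0) (Suc 0) + (-1/4) * fst \<Psi> [Suc 0] * V0 (fst B) LR1 2 2 + (-1/4) * fst \<Psi> [Suc 0] * V0 (fst B) LR1 3 3 + (1/4) * fst \<Psi> [3] * V0 (fst B) LR1 0 0 + (1/4) * fst \<Psi> [3] * V0 (fst B) LR1 (Suc 0) (Suc 0) + (-1/4) * fst \<Psi> [3] * V0 (fst B) LR1 2 2 + (1/4) * fst \<Psi> [3] * V0 (fst B) LR1 3 3 + (3/4) * fst \<Psi> [3] * V0 (snd B) LR1 0 3 + (1/4) * fst \<Psi>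 [3] * V0 (snd B) LR1 (Suc 0) 2 + (1/4) * fst \<Psi> [3] * V0 (snd B) LR1 2 (Suc 0) + (-3/4) * fst \<Psi> [3] * V0 (snd B) LR1 3 0 + (1/4) * V0 (fst B) LR1 0 0 + (1/4) * V0 (fst B) LR1 (Suc 0) (Suc 0) + (1/4) * V0 (fst B) LR1 2 2 + (-1/4) * V0 (fst B) LR1 3 3 + (-1/2) * V0 (snd B) LR1 0 3 + (1/2) * V0 (snd B) LR1 3 0"
  "V0 (fst (psi_apply \<Psi> B)) LR1 (Suc 0) (Suc 0) = (-1/4) * fst \<Psi> [0] * V0 (fst B) LR1 0 0 + (1/4) * fst \<Psi> [0] * V0 (fst B) LR1 (Suc 0) (Suc 0) + (-1/4) * fst \<Psi> [0] * V0 (fst B) LR1 2 2 + (-1/4) * fst \<Psi> [0] * V0 (fst B) LR1 3 3 + (1/4) * fst \<Psi> [0] * V0 (snd B) LR1 0 3 + (1/4) * fst \<Psi> [0] * V0 (snd B) LR1 (Suc 0) 2 + (1/4) * fst \<Psi> [0] * V0 (snd B) LR1 2 (Suc 0) + (-1/4) * fst \<Psi> [0] * V0 (snd B) LR1 3 0 + (-1/4) * fst \<Psi> [Suc 0] * V0 (fst B) LR1 0 0 + (1/4) * fst \<Psi> [Suc 0] * V0 (fst B) LR1 (Suc 0) (Suc 0) + (1/4) * fst \<Psi> [Suc 0] * V0 (fst B) LR1 2 2 + (1/4) * fst \<Psi> [Suc 0] * V0 (fst B) LR1 3 3 + (1/4) * fst \<Psi> [3] * V0 (fst B) LR1 0 0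 + (1/4) * fst \<Psi> [3] * V0 (fst B) LR1 (Suc 0) (Suc 0) + (-1/4) * fst \<Psi> [3] * V0 (fst B) LR1 2 2 + (1/4) * fst \<Psi> [3] * V0 (fst B) LR1 3 3 + (-1/4) * fst \<Psi> [3] * V0 (snd B) LR1 0 3 + (-3/4) * fst \<Psi> [3] * V0 (snd B) LR1 (Suc 0) 2 + (-3/4) * fst \<Psi> [3] * V0 (snd B) LR1 2 (Suc 0) + (1/4) * fst \<Psi> [3] * V0 (snd B) LR1 3 0 + (1/4) * V0 (fst B) LR1 0 0 + (1/4) * V0 (fst B) LR1 (Suc 0) (Suc 0) + (1/4) * V0 (fst B) LR1 2 2 + (-1/4) * V0 (fst B) LR1 3 3 + (1/2) * V0 (snd B) LR1 (Suc 0) 2 + (1/2) * V0 (snd B) LR1 2 (Suc 0)"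
  "V0 (fst (psi_apply \<Psi> B)) LR1 2 2 = (1/4) * fst \<Psi> [0] * V0 (fst B) LR1 0 0 + (-1/4) * fst \<Psi> [0] * V0 (fst B) LR1 (Suc 0) (Suc 0) + (1/4) * fst \<Psi> [0] * V0 (fst B) LR1 2 2 + (1/4) * fst \<Psi> [0] * V0 (fst B) LR1 3 3 + (-1/4) * fst \<Psi> [0] * V0 (snd B) LR1 0 3 + (-1/4) * fst \<Psi> [0] * V0 (snd B) LR1 (Suc 0) 2 + (-1/4) * fst \<Psi> [0] * V0 (snd B) LR1 2 (Suc 0) + (1/4) * fst \<Psi> [0] * V0 (snd B) LR1 3 0 + (-1/4) * fst \<Psi> [Suc 0] * V0 (fst B) LR1 0 0 + (1/4) * fst \<Psi> [Suc 0] * V0 (fst B) LR1 (Suc 0) (Suc 0) + (1/4) * fst \<Psi> [Suc 0] * V0 (fst B) LR1 2 2 + (1/4) * fst \<Psi> [Suc 0] * V0 (fst B) LR1 3 3 + (-1/4) * fst \<Psi> [3] * V0 (fst B) LR1 0 0 + (-1/4) * fst \<Psi> [3] * V0 (fst B) LR1 (Suc 0) (Suc 0) + (1/4) * fst \<Psi> [3] * V0 (fst B) LR1 2 2 + (-1/4) * fst \<Psi> [3] * V0 (fst B) LR1 3 3 + (1/4) * fst \<Psi> [3] * V0 (snd B) LR1 0 3 + (3/4) * fst \<Psi> [3] * V0 (snd B) LR1 (Suc 0) 2 + (3/4) * fst \<Psi> [3] * V0 (snd B) LR1 2 (Suc 0) + (-1/4) * fst \<Psi> [3] * V0 (snd B)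 LR1 3 0 + (1/4) * V0 (fst B) LR1 0 0 + (1/4) * V0 (fst B) LR1 (Suc 0) (Suc 0) + (1/4) * V0 (fst B) LR1 2 2 + (-1/4) * V0 (fst B) LR1 3 3 + (-1/2) * V0 (snd B) LR1 (Suc 0) 2 + (-1/2) * V0 (snd B) LR1 2 (Suc 0)"
  "V0 (fst (psi_apply \<Psi> B)) LR1 3 3 = (1/4) * fst \<Psi> [0] * V0 (fst B) LR1 0 0 + (-1/4) * fst \<Psi> [0] * V0 (fst B) LR1 (Suc 0) (Suc 0) + (1/4) * fst \<Psi> [0] * V0 (fst B) LR1 2 2 + (1/4) * fst \<Psi> [0] * V0 (fst B) LR1 3 3 + (-1/4) * fst \<Psi> [0] * V0 (snd B) LR1 0 3 + (-1/4) * fst \<Psi> [0] * V0 (snd B) LR1 (Suc 0) 2 + (-1/4) * fst \<Psi> [0] * V0 (snd B) LR1 2 (Suc 0) + (1/4) * fst \<Psi> [0] * V0 (snd B) LR1 3 0 + (-1/4) * fst \<Psi> [Suc 0] * V0 (fst B) LR1 0 0 + (1/4) * fst \<Psi> [Suc 0] * V0 (fst B) LR1 (Suc 0) (Suc 0) + (1/4) * fst \<Psi> [Suc 0] * V0 (fst B) LR1 2 2 + (1/4) * fst \<Psi> [Suc 0] * V0 (fst B) LR1 3 3 + (1/4) * fst \<Psi> [3] * V0 (fst B) LR1 0 0 + (1/4) * fst \<Psi> [3] * V0 (fst B) LR1 (Suc 0) (Suc 0) + (-1/4) * fst \<Psi> [3] * V0 (fst B) LR1 2 2 + (1/4) * fst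 \<Psi> [3] * V0 (fst B) LR1 3 3 + (3/4) * fst \<Psi> [3] * V0 (snd B) LR1 0 3 + (1/4) * fst \<Psi> [3] * V0 (snd B) LR1 (Suc 0) 2 + (1/4) * fst \<Psi> [3] * V0 (snd B) LR1 2 (Suc 0) + (-3/4) * fst \<Psi> [3] * V0 (snd B) LR1 3 0 + (-1/4) * V0 (fst B) LR1 0 0 + (-1/4) * V0 (fst B) LR1 (Suc 0) (Suc 0) + (-1/4) * V0 (fst B) LR1 2 2 + (1/4) * V0 (fst B) LR1 3 3 + (-1/2) * V0 (snd B) LR1 0 3 + (1/2) * V0 (snd B) LR1 3 0"
  "V0 (snd (psi_apply \<Psi> B)) LR1 0 3 = (-1/4) * fst \<Psi> [0] * V0 (fst B) LR1 0 0 + (1/4) * fst \<Psi> [0] * V0 (fst B) LR1 (Suc 0) (Suc 0) + (-1/4) * fst \<Psi> [0] * V0 (fst B) LR1 2 2 + (-1/4) * fst \<Psi> [0] * V0 (fst B) LR1 3 3 + (1/4) * fst \<Psi> [0] * V0 (snd B) LR1 0 3 + (1/4) * fst \<Psi> [0] * V0 (snd B) LR1 (Suc 0) 2 + (1/4) * fst \<Psi> [0] * V0 (snd B) LR1 2 (Suc 0) + (-1/4) * fst \<Psi> [0] * V0 (snd B) LR1 3 0 + (1/4) * fst \<Psi> [Suc 0] * V0 (snd B) LR1 0 3 + (-1/4) * fst \<Psi> [Suc 0] * V0 (snd B) LR1 (Suc 0) 2 + (1/4) * fst \<Psi> [Suc 0] * V0 (snd B) LR1 2 (Suc 0) + (1/4)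 * fst \<Psi> [Suc 0] * V0 (snd B) LR1 3 0 + (3/4) * fst \<Psi> [3] * V0 (fst B) LR1 0 0 + (-1/4) * fst \<Psi> [3] * V0 (fst B) LR1 (Suc 0) (Suc 0) + (1/4) * fst \<Psi> [3] * V0 (fst B) LR1 2 2 + (3/4) * fst \<Psi> [3] * V0 (fst B) LR1 3 3 + (1/4) * fst \<Psi> [3] * V0 (snd B) LR1 0 3 + (-1/4) * fst \<Psi> [3] * V0 (snd B) LR1 (Suc 0) 2 + (-1/4) * fst \<Psi> [3] * V0 (snd B) LR1 2 (Suc 0) + (-1/4) * fst \<Psi> [3] * V0 (snd B) LR1 3 0 + (-1/2) * V0 (fst B) LR1 0 0 + (-1/2) * V0 (fst B) LR1 3 3 + (1/4) * V0 (snd B) LR1 0 3 + (1/4) * V0 (snd B) LR1 (Suc 0) 2 + (-1/4) * V0 (snd B) LR1 2 (Suc 0) + (1/4) * V0 (snd B) LR1 3 0"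
  "V0 (snd (psi_apply \<Psi> B)) LR1 (Suc 0) 2 = (-1/4) * fst \<Psi> [0] * V0 (fst B) LR1 0 0 + (1/4) * fst \<Psi> [0] * V0 (fst B) LR1 (Suc 0) (Suc 0) + (-1/4) * fst \<Psi> [0] * V0 (fst B) LR1 2 2 + (-1/4) * fst \<Psi> [0] * V0 (fst B) LR1 3 3 + (1/4) * fst \<Psi> [0] * V0 (snd B) LR1 0 3 + (1/4) * fst \<Psi> [0] * V0 (snd B) LR1 (Suc 0) 2 + (1/4) * fst \<Psi> [0] * V0 (snd B) LR1 2 (Suc 0) + (-1/4) * fst \<Psi> [0] * V0 (snd B) LR1 3 0 + (-1/4) * fst \<Psi> [Suc 0] * V0 (snd B) LR1 0 3 + (1/4) * fst \<Psi> [Suc 0] * V0 (snd B) LR1 (Suc 0) 2 + (-1/4) * fst \<Psi> [Suc 0] * V0 (snd B) LR1 2 (Suc 0) + (-1/4) * fst \<Psi> [Suc 0] * V0 (snd B) LR1 3 0 + (1/4) * fst \<Psi> [3] * V0 (fst B) LR1 0 0 + (-3/4) * fst \<Psi> [3] * V0 (fst B) LR1 (Suc 0) (Suc 0) + (3/4) * fst \<Psi> [3] * V0 (fst B) LR1 2 2 + (1/4) * fst \<Psi> [3] * V0 (fst B) LR1 3 3 + (-1/4) * fst \<Psi> [3] * V0 (snd B) LR1 0 3 + (1/4) * fst \<Psi> [3] * V0 (snd B) LR1 (Suc 0) 2 + (1/4) * fst \<Psi> [3] * V0 (snd B) LR1 2 (Suc 0) + (1/4) * fst \<Psi> [3] *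 V0 (snd B) LR1 3 0 + (1/2) * V0 (fst B) LR1 (Suc 0) (Suc 0) + (-1/2) * V0 (fst B) LR1 2 2 + (1/4) * V0 (snd B) LR1 0 3 + (1/4) * V0 (snd B) LR1 (Suc 0) 2 + (-1/4) * V0 (snd B) LR1 2 (Suc 0) + (1/4) * V0 (snd B) LR1 3 0"
  "V0 (snd (psi_apply \<Psi> B)) LR1 2 (Suc 0) = (-1/4) * fst \<Psi> [0] * V0 (fst B) LR1 0 0 + (1/4) * fst \<Psi> [0] * V0 (fst B) LR1 (Suc 0) (Suc 0) + (-1/4) * fst \<Psi> [0] * V0 (fst B) LR1 2 2 + (-1/4) * fst \<Psi> [0] * V0 (fst B) LR1 3 3 + (1/4) * fst \<Psi> [0] * V0 (snd B) LR1 0 3 + (1/4) * fst \<Psi> [0] * V0 (snd B) LR1 (Suc 0) 2 + (1/4) * fst \<Psi> [0] * V0 (snd B) LR1 2 (Suc 0) + (-1/4) * fst \<Psi> [0] * V0 (snd B) LR1 3 0 + (1/4) * fst \<Psi> [Suc 0] * V0 (snd B) LR1 0 3 + (-1/4) * fst \<Psi> [Suc 0] * V0 (snd B) LR1 (Suc 0) 2 + (1/4) * fst \<Psi> [Suc 0] * V0 (snd B) LR1 2 (Suc 0) + (1/4) * fst \<Psi> [Suc 0] * V0 (snd B) LR1 3 0 + (1/4) * fst \<Psi> [3] * V0 (fst B) LR1 0 0 + (-3/4) * fst \<Psi> [3] * V0 (fst B) LR1 (Suc 0) (Suc 0) + (3/4) * fst \<Psi> [3] * V0 (fst B) LR1 2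 2 + (1/4) * fst \<Psi> [3] * V0 (fst B) LR1 3 3 + (-1/4) * fst \<Psi> [3] * V0 (snd B) LR1 0 3 + (1/4) * fst \<Psi> [3] * V0 (snd B) LR1 (Suc 0) 2 + (1/4) * fst \<Psi> [3] * V0 (snd B) LR1 2 (Suc 0) + (1/4) * fst \<Psi> [3] * V0 (snd B) LR1 3 0 + (1/2) * V0 (fst B) LR1 (Suc 0) (Suc 0) + (-1/2) * V0 (fst B) LR1 2 2 + (-1/4) * V0 (snd B) LR1 0 3 + (-1/4) * V0 (snd B) LR1 (Suc 0) 2 + (1/4) * V0 (snd B) LR1 2 (Suc 0) + (-1/4) * V0 (snd B) LR1 3 0"
  "V0 (snd (psi_apply \<Psi> B)) LR1 3 0 = (1/4) * fst \<Psi> [0] * V0 (fst B) LR1 0 0 + (-1/4) * fst \<Psi> [0] * V0 (fst B) LR1 (Suc 0) (Suc 0) + (1/4) * fst \<Psi> [0] * V0 (fst B) LR1 2 2 + (1/4) * fst \<Psi> [0] * V0 (fst B) LR1 3 3 + (-1/4) * fst \<Psi> [0] * V0 (snd B) LR1 0 3 + (-1/4) * fst \<Psi> [0] * V0 (snd B) LR1 (Suc 0) 2 + (-1/4) * fst \<Psi> [0] * V0 (snd B) LR1 2 (Suc 0) + (1/4) * fst \<Psi> [0] * V0 (snd B) LR1 3 0 + (1/4) * fst \<Psi> [Suc 0] * V0 (snd B) LR1 0 3 + (-1/4) * fst \<Psi> [Suc 0] * V0 (snd B) LR1 (Suc 0) 2 + (1/4) * fst \<Psi> [Suc 0] * V0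 (snd B) LR1 2 (Suc 0) + (1/4) * fst \<Psi> [Suc 0] * V0 (snd B) LR1 3 0 + (-3/4) * fst \<Psi> [3] * V0 (fst B) LR1 0 0 + (1/4) * fst \<Psi> [3] * V0 (fst B) LR1 (Suc 0) (Suc 0) + (-1/4) * fst \<Psi> [3] * V0 (fst B) LR1 2 2 + (-3/4) * fst \<Psi> [3] * V0 (fst B) LR1 3 3 + (-1/4) * fst \<Psi> [3] * V0 (snd B) LR1 0 3 + (1/4) * fst \<Psi> [3] * V0 (snd B) LR1 (Suc 0) 2 + (1/4) * fst \<Psi> [3] * V0 (snd B) LR1 2 (Suc 0) + (1/4) * fst \<Psi> [3] * V0 (snd B) LR1 3 0 + (1/2) * V0 (fst B) LR1 0 0 + (1/2) * V0 (fst B) LR1 3 3 + (1/4) * V0 (snd B) LR1 0 3 + (1/4) * V0 (snd B) LR1 (Suc 0) 2 + (-1/4) * V0 (snd B) LR1 2 (Suc 0) + (1/4) * V0 (snd B) LR1 3 0"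
  unfolding psi_apply_def by (simp add: CMP cons_D[OF assms]; simp add: field_simps)+

lemma P1v: assumes "cons \<Psi>" shows
    "V0 (fst (psi_apply \<Psi> (UA1, UA2))) LR1 0 0 = (1/4) + (1/4) * fst \<Psi> [0] + (1/4) * fst \<Psi> [Suc 0] + (1/4) * fst \<Psi> [3]"
    "V0 (fst (psi_apply \<Psi> (UA1, UA2))) LR1 (Suc 0) (Suc 0) = (1/4) + (-1/4) * fst \<Psi> [0] + (-1/4) * fst \<Psi> [Suc 0] + (1/4) * fst \<Psi> [3]"
    "V0 (fst (psi_apply \<Psi> (UA1, UA2))) LR1 2 2 = (1/4) + (1/4) * fst \<Psi> [0] + (-1/4) * fst \<Psi> [Suc 0] + (-1/4) * fst \<Psi> [3]"
    "V0 (fst (psi_apply \<Psi> (UA1, UA2))) LR1 3 3 = (-1/4) + (1/4) * fst \<Psi> [0] + (-1/4) * fst \<Psi> [Suc 0] + (1/4) * fst \<Psi> [3]"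
    "V0 (snd (psi_apply \<Psi> (UA1, UA2))) LR1 0 3 = (-1/2) + (-1/4) * fst \<Psi> [0] + (3/4) * fst \<Psi> [3]"
    "V0 (snd (psi_apply \<Psi> (UA1, UA2))) LR1 (Suc 0) 2 = (-1/4) * fst \<Psi> [0] + (1/4) * fst \<Psi> [3]"
    "V0 (snd (psi_apply \<Psi> (UA1, UA2))) LR1 2 (Suc 0) = (-1/4) * fst \<Psi> [0] + (1/4) * fst \<Psi> [3]"
    "V0 (snd (psi_apply \<Psi> (UA1, UA2))) LR1 3 0 = (1/2) + (1/4) * fst \<Psi> [0] + (-3/4) * fst \<Psi> [3]"
  by (simp add: block[OF assms, where B="(UA1, UA2)"]; simp add: field_simps)+

lemma P2v: assumes "cons \<Psi>" shows
    "V0 (fst (psi_apply \<Psi> (psi_apply \<Psi> (UA1, UA2)))) LR1 0 0 = (3/4) + (1/2) * fst \<Psi> [0] + (1/2) * fst \<Psi> [0] * fst \<Psi> [0] + (-1) * fst \<Psi> [0] * fst \<Psi> [3] + (1/4) * fst \<Psi> [Suc 0] * fst \<Psi> [Suc 0] + (-3/2) * fst \<Psi> [3] + (3/2) * fst \<Psi> [3] * fst \<Psi> [3]"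
    "V0 (fst (psi_apply \<Psi> (psi_apply \<Psi> (UA1, UA2)))) LR1 (Suc 0) (Suc 0) = (1/4) + (-1/2) * fst \<Psi> [0] + (-1/2) * fst \<Psi> [0] * fst \<Psi> [0] + (1) * fst \<Psi> [0] * fst \<Psi> [3] + (-1/4) * fst \<Psi> [Suc 0] * fst \<Psi> [Suc 0] + (1/2) * fst \<Psi> [3] + (-1/2) * fst \<Psi> [3] * fst \<Psi> [3]"
    "V0 (fst (psi_apply \<Psi> (psi_apply \<Psi> (UA1, UA2)))) LR1 2 2 = (1/4) + (1/2) * fst \<Psi> [0] + (1/2) * fst \<Psi> [0] * fst \<Psi> [0] + (-1) * fst \<Psi> [0] * fst \<Psi> [3] + (-1/4) * fst \<Psi> [Suc 0] * fst \<Psi> [Suc 0] + (-1/2) * fst \<Psi> [3] + (1/2) * fst \<Psi> [3] * fst \<Psi> [3]"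
    "V0 (fst (psi_apply \<Psi> (psi_apply \<Psi> (UA1, UA2)))) LR1 3 3 = (1/4) + (1/2) * fst \<Psi> [0] + (1/2) * fst \<Psi> [0] * fst \<Psi> [0] + (-1) * fst \<Psi> [0] * fst \<Psi> [3] + (-1/4) * fst \<Psi> [Suc 0] * fst \<Psi> [Suc 0] + (-3/2) * fst \<Psi> [3] + (3/2) * fst \<Psi> [3] * fst \<Psi> [3]"
    "V0 (snd (psi_apply \<Psi> (psi_apply \<Psi> (UA1, UA2)))) LR1 0 3 = (-1/2) * fst \<Psi> [0] + (-1/2) * fst \<Psi> [0] * fst \<Psi> [0] + (1) * fst \<Psi> [0] * fst \<Psi> [3] + (-1/2) * fst \<Psi> [3] + (1/2) * fst \<Psi> [3] * fst \<Psi> [3]"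
    "V0 (snd (psi_apply \<Psi> (psi_apply \<Psi> (UA1, UA2)))) LR1 (Suc 0) 2 = (-1/2) * fst \<Psi> [0] + (-1/2) * fst \<Psi> [0] * fst \<Psi> [0] + (1) * fst \<Psi> [0] * fst \<Psi> [3] + (1/2) * fst \<Psi> [3] + (-1/2) * fst \<Psi> [3] * fst \<Psi> [3]"
    "V0 (snd (psi_apply \<Psi> (psi_apply \<Psi> (UA1, UA2)))) LR1 2 (Suc 0) = (-1/2) * fst \<Psi> [0] + (-1/2) * fst \<Psi> [0] * fst \<Psi> [0] + (1) * fst \<Psi> [0] * fst \<Psi> [3] + (1/2) * fst \<Psi> [3] + (-1/2) * fst \<Psi> [3] * fst \<Psi> [3]"
    "V0 (snd (psi_apply \<Psi> (psi_apply \<Psi> (UA1, UA2)))) LR1 3 0 = (1/2) * fst \<Psi> [0] + (1/2) * fst \<Psi> [0] * fst \<Psi> [0] + (-1) * fst \<Psi> [0] * fst \<Psi> [3] + (1/2) * fst \<Psi> [3] + (-1/2) * fst \<Psi> [3] * fst \<Psi> [3]"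
  by (simp only: block[OF assms, where B="psi_apply \<Psi> (UA1, UA2)"] P1v[OF assms]; simp add: field_simps)+

lemma P3v: assumes "cons \<Psi>" shows
    "V0 (fst (psi_apply \<Psi> (psi_apply \<Psi> (psi_apply \<Psi> (UA1, UA2))))) LR1 0 0 = (1/4) + (3/4) * fst \<Psi> [0] + (3/2) * fst \<Psi> [0] * fst \<Psi> [0] + (1) * fst \<Psi> [0] * fst \<Psi> [0] * fst \<Psi> [0] + (-3) * fst \<Psi> [0] * fst \<Psi> [0] * fst \<Psi> [3] + (-3) * fst \<Psi> [0] * fst \<Psi> [3] + (3) * fst \<Psi> [0] * fst \<Psi> [3] * fst \<Psi> [3] + (1/4) * fst \<Psi> [Suc 0] * fst \<Psi> [Suc 0] * fst \<Psi> [Suc 0] + (3/4) * fst \<Psi> [3] + (-3/2) * fst \<Psi> [3] * fst \<Psi> [3] + (1) * fst \<Psi> [3] * fst \<Psi> [3] * fst \<Psi> [3]"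
    "V0 (fst (psi_apply \<Psi> (psi_apply \<Psi> (psi_apply \<Psi> (UA1, UA2))))) LR1 (Suc 0) (Suc 0) = (1/4) + (-3/4) * fst \<Psi> [0] + (-3/2) * fst \<Psi> [0] * fst \<Psi> [0] + (-1) * fst \<Psi> [0] * fst \<Psi> [0] * fst \<Psi> [0] + (3) * fst \<Psi> [0] * fst \<Psi> [0] * fst \<Psi> [3] + (3) * fst \<Psi> [0] * fst \<Psi> [3] + (-3) * fst \<Psi> [0] * fst \<Psi> [3] * fst \<Psi> [3] + (-1/4) * fst \<Psi> [Suc 0] * fst \<Psi> [Suc 0] * fst \<Psi> [Suc 0] + (3/4) * fst \<Psi> [3] + (-3/2) * fst \<Psi> [3] * fst \<Psi> [3] + (1) * fst \<Psi> [3] * fst \<Psi> [3] * fst \<Psi> [3]"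
    "V0 (fst (psi_apply \<Psi> (psi_apply \<Psi> (psi_apply \<Psi> (UA1, UA2))))) LR1 2 2 = (1/4) + (3/4) * fst \<Psi> [0] + (3/2) * fst \<Psi> [0] * fst \<Psi> [0] + (1) * fst \<Psi> [0] * fst \<Psi> [0] * fst \<Psi> [0] + (-3) * fst \<Psi> [0] * fst \<Psi> [0] * fst \<Psi> [3] + (-3) * fst \<Psi> [0] * fst \<Psi> [3] + (3) * fst \<Psi> [0] * fst \<Psi> [3] * fst \<Psi> [3] + (-1/4) * fst \<Psi> [Suc 0] * fst \<Psi> [Suc 0] * fst \<Psi> [Suc 0] + (-3/4) * fst \<Psi> [3] + (3/2) * fst \<Psi> [3] * fst \<Psi> [3] + (-1) * fst \<Psi> [3] * fst \<Psi> [3] * fst \<Psi> [3]"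
    "V0 (fst (psi_apply \<Psi> (psi_apply \<Psi> (psi_apply \<Psi> (UA1, UA2))))) LR1 3 3 = (-1/4) + (3/4) * fst \<Psi> [0] + (3/2) * fst \<Psi> [0] * fst \<Psi> [0] + (1) * fst \<Psi> [0] * fst \<Psi> [0] * fst \<Psi> [0] + (-3) * fst \<Psi> [0] * fst \<Psi> [0] * fst \<Psi> [3] + (-3) * fst \<Psi> [0] * fst \<Psi> [3] + (3) * fst \<Psi> [0] * fst \<Psi> [3] * fst \<Psi> [3] + (-1/4) * fst \<Psi> [Suc 0] * fst \<Psi> [Suc 0] * fst \<Psi> [Suc 0] + (3/4) * fst \<Psi> [3] + (-3/2) * fst \<Psi> [3] * fst \<Psi> [3] + (1) * fst \<Psi> [3] * fst \<Psi> [3] * fst \<Psi> [3]"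
    "V0 (snd (psi_apply \<Psi> (psi_apply \<Psi> (psi_apply \<Psi> (UA1, UA2))))) LR1 0 3 = (-1/2) + (-3/4) * fst \<Psi> [0] + (-3/2) * fst \<Psi> [0] * fst \<Psi> [0] + (-1) * fst \<Psi> [0] * fst \<Psi> [0] * fst \<Psi> [0] + (3) * fst \<Psi> [0] * fst \<Psi> [0] * fst \<Psi> [3] + (3) * fst \<Psi> [0] * fst \<Psi> [3] + (-3) * fst \<Psi> [0] * fst \<Psi> [3] * fst \<Psi> [3] + (9/4) * fst \<Psi> [3] + (-9/2) * fst \<Psi> [3] * fst \<Psi> [3] + (3) * fst \<Psi> [3] * fst \<Psi> [3] * fst \<Psi> [3]"
    "V0 (snd (psi_apply \<Psi> (psi_apply \<Psi> (psi_apply \<Psi> (UA1, UA2))))) LR1 (Suc 0) 2 = (-3/4) * fst \<Psi> [0] + (-3/2) * fst \<Psi> [0] * fst \<Psi> [0] + (-1) * fst \<Psi> [0] * fst \<Psi> [0] * fst \<Psi> [0] + (3) * fst \<Psi> [0] * fst \<Psi> [0] * fst \<Psi> [3] + (3) * fst \<Psi> [0] * fst \<Psi> [3] + (-3) * fst \<Psi> [0] * fst \<Psi> [3] * fst \<Psi> [3] + (3/4) * fst \<Psi> [3] + (-3/2) * fst \<Psi> [3] * fst \<Psi> [3] + (1) * fst \<Psi> [3] * fst \<Psi> [3] * fst \<Psi> [3]"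
    "V0 (snd (psi_apply \<Psi> (psi_apply \<Psi> (psi_apply \<Psi> (UA1, UA2))))) LR1 2 (Suc 0) = (-3/4) * fst \<Psi> [0] + (-3/2) * fst \<Psi> [0] * fst \<Psi> [0] + (-1) * fst \<Psi> [0] * fst \<Psi> [0] * fst \<Psi> [0] + (3) * fst \<Psi> [0] * fst \<Psi> [0] * fst \<Psi> [3] + (3) * fst \<Psi> [0] * fst \<Psi> [3] + (-3) * fst \<Psi> [0] * fst \<Psi> [3] * fst \<Psi> [3] + (3/4) * fst \<Psi> [3] + (-3/2) * fst \<Psi> [3] * fst \<Psi> [3] + (1) * fst \<Psi> [3] * fst \<Psi> [3] * fst \<Psi> [3]"
    "V0 (snd (psi_apply \<Psi> (psi_apply \<Psi> (psi_apply \<Psi> (UA1, UA2))))) LR1 3 0 = (1/2) + (3/4) * fst \<Psi> [0] + (3/2) * fst \<Psi> [0] * fst \<Psi> [0] + (1) * fst \<Psi> [0] * fst \<Psi> [0] * fst \<Psi> [0] + (-3) * fst \<Psi> [0] * fst \<Psi> [0] * fst \<Psi> [3] + (-3) * fst \<Psi> [0] * fst \<Psi> [3] + (3) * fst \<Psi> [0] * fst \<Psi> [3] * fst \<Psi> [3] + (-9/4) * fst \<Psi> [3] + (9/2) * fst \<Psi> [3] * fst \<Psi> [3] + (-3) * fst \<Psi> [3] * fst \<Psi> [3] * fst \<Psi> [3]"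
  by (simp only: block[OF assms, where B="psi_apply \<Psi> (psi_apply \<Psi> (UA1, UA2))"] P2v[OF assms]; simp add: field_simps)+

lemma eig: assumes "cons \<Psi>" shows
 "fst \<Psi> [Suc 0] = 2*(V0 (fst (psi_apply \<Psi> (UA1, UA2))) LR1 0 0 - V0 (fst (psi_apply \<Psi> (UA1, UA2))) LR1 3 3) - 1"
 "(2*fst \<Psi> [0] - 2*fst \<Psi> [3] + 1) = 4*(V0 (fst (psi_apply \<Psi> (UA1, UA2))) LR1 2 2 - V0 (fst (psi_apply \<Psi> (UA1, UA2))) LR1 (Suc 0) (Suc 0)) + 1"
 "(2*fst \<Psi> [3] - 1) = 4*V0 (snd (psi_apply \<Psi> (UA1, UA2))) LR1 0 3 + (2*fst \<Psi> [0] - 2*fst \<Psi> [3] + 1)/2 + 1/2"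
 "(fst \<Psi> [Suc 0])^2 = 2*(V0 (fst (psi_apply \<Psi> (psi_apply \<Psi> (UA1, UA2)))) LR1 0 0 - V0 (fst (psi_apply \<Psi> (psi_apply \<Psi> (UA1, UA2)))) LR1 3 3) - 1"
 "(2*fst \<Psi> [0] - 2*fst \<Psi> [3] + 1)^2 = 4*(V0 (fst (psi_apply \<Psi> (psi_apply \<Psi> (UA1, UA2)))) LR1 2 2 - V0 (fst (psi_apply \<Psi> (psi_apply \<Psi> (UA1, UA2)))) LR1 (Suc 0) (Suc 0)) + 1"
 "(2*fst \<Psi> [3] - 1)^2 = 4*V0 (snd (psi_apply \<Psi> (psi_apply \<Psi> (UA1, UA2)))) LR1 0 3 + (2*fst \<Psi> [0] - 2*fst \<Psi> [3] + 1)^2/2 + 1/2"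
 "(fst \<Psi> [Suc 0])^3 = 2*(V0 (fst (psi_apply \<Psi> (psi_apply \<Psi> (psi_apply \<Psi> (UA1, UA2))))) LR1 0 0 - V0 (fst (psi_apply \<Psi> (psi_apply \<Psi> (psi_apply \<Psi> (UA1, UA2))))) LR1 3 3) - 1"
 "(2*fst \<Psi> [0] - 2*fst \<Psi> [3] + 1)^3 = 4*(V0 (fst (psi_apply \<Psi> (psi_apply \<Psi> (psi_apply \<Psi> (UA1, UA2))))) LR1 2 2 - V0 (fst (psi_apply \<Psi> (psi_apply \<Psi> (psi_apply \<Psi> (UA1, UA2))))) LR1 (Suc 0) (Suc 0)) + 1"
 "(2*fst \<Psi> [3] - 1)^3 = 4*V0 (snd (psi_apply \<Psi> (psi_apply \<Psi> (psi_apply \<Psi> (UA1, UA2))))) LR1 0 3 + (2*fst \<Psi> [0] - 2*fst \<Psi> [3] + 1)^3/2 + 1/2"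
  by (simp only: P1v[OF assms] P2v[OF assms] P3v[OF assms]; simp add: field_simps power2_eq_square power3_eq_cube)+

lemma hat_p_eq: assumes "k \<ge> 1" shows "hat_p f k = S8 (\<lambda>j. f [j] * r_in_hat (Suc j) k)"
proof -
  have w: "{u. set u \<subseteq> {0..<8} \<and> length u = length [k - 1]} = (\<lambda>j. [j]) ` {..<(8::nat)}"
    by (auto simp: length_Suc_conv)
  have inj: "inj_on (\<lambda>j::nat. [j]) A" for A by (auto simp: inj_on_def)
  show ?thesis unfolding hat_p_def mixed_coeff_def w
    using assms by (simp add: sum.reindex[OF inj] sum8)
qed

lemma sq1: "(x::real)^2 = 1 \<Longrightarrow> x = -1 \<or> x = 1" by (auto simp: power2_eq_1_iff)
lemma sq0: "(x::real)^2 = x \<Longrightarrow> x = 0 \<or> x = 1" by (auto simp: power2_eq_square)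
lemma cb: "(x::real)^3 = x \<Longrightarrow> x = -1 \<or> x = 0 \<or> x = 1"
proof -
  assume h: "x^3 = x"
  have "x * (x - 1) * (x + 1) = 0" using h by (simp add: algebra_simps power3_eq_cube)
  thus ?thesis by auto
qed

lemma eqm_V1: "eq_mod_t2 x y \<Longrightarrow> V1 x l a b = V1 y l a b"
  by (simp add: eq_mod_t2_def V1_def ev1_def)

lemma rotQ: "rot_t (UQ1, UQ2) = (Q1r, Q2r)" "rot_t (UA1, UA2) = (A1r, A2r)"
  by (simp_all add: rot_t_def Q1r_def Q2r_def A1r_def A2r_def)

lemma cons_derive:
  assumes "clifford_conservative \<Psi>"
    and "natural \<Psi>"
    and "transposition_invariant \<Psi>"
    and "orthogonally_invariant \<Psi>"
  shows "cons \<Psi>"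
proof -
  have cc: "fst \<Psi> [] = 1" "snd \<Psi> [] = 1" using assms(1) by (simp_all add: clifford_conservative_def)
  have T: "psi_eval (\<lambda>x y. emul y x) \<Psi> UQ1 UQ2 UA1 UA2 = psi_eval emul \<Psi> UQ1 UQ2 UA1 UA2"
    using assms(3) by (simp add: transposition_invariant_def)
  have t1: "V0 (fst (psi_eval (\<lambda>x y. emul y x) \<Psi> UQ1 UQ2 UA1 UA2)) LR2 3 0 = V0 (fst (psi_eval emul \<Psi> UQ1 UQ2 UA1 UA2)) LR2 3 0"
    "V0 (fst (psi_eval (\<lambda>x y. emul y x) \<Psi> UQ1 UQ2 UA1 UA2)) LR2 2 1 = V0 (fst (psi_eval emul \<Psi> UQ1 UQ2 UA1 UA2)) LR2 2 1"
    "V0 (snd (psi_eval (\<lambda>x y. emul y x) \<Psi> UQ1 UQ2 UA1 UA2)) LR1 3 0 = V0 (snd (psi_eval emul \<Psi> UQ1 UQ2 UA1 UA2)) LR1 3 0"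
    "V0 (snd (psi_eval (\<lambda>x y. emul y x) \<Psi> UQ1 UQ2 UA1 UA2)) LR1 2 1 = V0 (snd (psi_eval emul \<Psi> UQ1 UQ2 UA1 UA2)) LR1 2 1"
    using T by simp_all
  have N: "trunc_th (fst (psi_apply \<Psi> (th_conj UA1, th_conj UA2))) = trunc_th (th_conj (fst (psi_apply \<Psi> (UA1, UA2))))"
    "trunc_th (snd (psi_apply \<Psi> (th_conj UA1, th_conj UA2))) = trunc_th (th_conj (snd (psi_apply \<Psi> (UA1, UA2))))"
    using assms(2) by (simp_all add: natural_def Let_def)
  have n1: "V0 (fst (psi_apply \<Psi> (th_conj UA1, th_conj UA2))) LTh 0 1 = V0 (th_conj (fst (psi_apply \<Psi> (UA1, UA2)))) LTh 0 1"
    "V0 (fst (psi_apply \<Psi> (th_conj UA1, th_conj UA2))) LTh 2 3 = V0 (th_conj (fst (psi_apply \<Psi> (UA1, UA2)))) LTh 2 3"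
    "V0 (snd (psi_apply \<Psi> (th_conj UA1, th_conj UA2))) LTh 0 2 = V0 (th_conj (snd (psi_apply \<Psi> (UA1, UA2)))) LTh 0 2"
    "V0 (snd (psi_apply \<Psi> (th_conj UA1, th_conj UA2))) LTh 1 3 = V0 (th_conj (snd (psi_apply \<Psi> (UA1, UA2)))) LTh 1 3"
    using trunc_V[OF N(1)] trunc_V[OF N(2)] by blast+
  have O: "eq_mod_t2 (fst (rot_t (psi_eval emul \<Psi> UQ1 UQ2 UA1 UA2))) (fst (psi_eval emul \<Psi> Q1r Q2r A1r A2r))"
    "eq_mod_t2 (snd (rot_t (psi_eval emul \<Psi> UQ1 UQ2 UA1 UA2))) (snd (psi_eval emul \<Psi> Q1r Q2r A1r A2r))"
    using assms(4) by (simp_all add: orthogonally_invariant_def Let_def rotQ)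
  have o1: "V1 (fst (rot_t (psi_eval emul \<Psi> UQ1 UQ2 UA1 UA2))) LR1 0 3 = V1 (fst (psi_eval emul \<Psi> Q1r Q2r A1r A2r)) LR1 0 3"
    "V1 (fst (rot_t (psi_eval emul \<Psi> UQ1 UQ2 UA1 UA2))) LR1 1 2 = V1 (fst (psi_eval emul \<Psi> Q1r Q2r A1r A2r)) LR1 1 2"
    "V1 (fst (rot_t (psi_eval emul \<Psi> UQ1 UQ2 UA1 UA2))) LR2 0 0 = V1 (fst (psi_eval emul \<Psi> Q1r Q2r A1r A2r)) LR2 0 0"
    "V1 (fst (rot_t (psi_eval emul \<Psi> UQ1 UQ2 UA1 UA2))) LR2 1 1 = V1 (fst (psi_eval emul \<Psi> Q1r Q2r A1r A2r)) LR2 1 1"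
    "V1 (snd (rot_t (psi_eval emul \<Psi> UQ1 UQ2 UA1 UA2))) LR1 1 1 = V1 (snd (psi_eval emul \<Psi> Q1r Q2r A1r A2r)) LR1 1 1"
    using eqm_V1[OF O(1)] eqm_V1[OF O(2)] by blast+
  from t1 n1 o1 cc show ?thesis unfolding cons_def
    by (simp add: CMP psi_apply_def thconj_V ser_Z rot_t_def ROT)
qed

theorem mainTheorem13:
  fixes \<Psi> :: fqop
  assumes "clifford_conservative \<Psi>"
    and "natural \<Psi>"
    and "transposition_invariant \<Psi>"
    and "orthogonally_invariant \<Psi>"
  shows "hat_p (fst \<Psi>) 1 = hat_p (fst \<Psi>) 2 \<and> hat_p (fst \<Psi>) 4 = hat_p (fst \<Psi>) 5
    \<and> (psi_apply \<Psi> (psi_apply \<Psi> (UA1, UA2)) = (UA1, UA2) \<longrightarrow>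
         (\<forall>k\<in>{1, 3, 4}. hat_p (fst \<Psi>) k \<in> {-1, 1}))
    \<and> (psi_apply \<Psi> (psi_apply \<Psi> (UA1, UA2)) = psi_apply \<Psi> (UA1, UA2) \<longrightarrow>
         (\<forall>k\<in>{1, 3, 4}. hat_p (fst \<Psi>) k \<in> {0, 1}))
    \<and> (psi_apply \<Psi> (psi_apply \<Psi> (psi_apply \<Psi> (UA1, UA2))) = psi_apply \<Psi> (UA1, UA2) \<longrightarrow>
         (\<forall>k\<in>{1, 3, 4}. hat_p (fst \<Psi>) k \<in> {-1, 0, 1}))"
proof -
  have C: "cons \<Psi>" using cons_derive[OF assms] .
  note cd = cons_D[OF C]
  have h1: "hat_p (fst \<Psi>) 1 = fst \<Psi> [Suc 0]" "hat_p (fst \<Psi>) 2 = fst \<Psi> [Suc 0]"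
    "hat_p (fst \<Psi>) 3 = 2*fst \<Psi> [0] - 2*fst \<Psi> [3] + 1" "hat_p (fst \<Psi>) 4 = 2*fst \<Psi> [3] - 1"
    "hat_p (fst \<Psi>) 5 = 2*fst \<Psi> [3] - 1"
    by (simp_all add: hat_p_eq S8_def r_in_hat_def cd)
  note E = eig[OF C]
  define b where "b = fst \<Psi> [Suc 0]"
  define x where "x = 2*fst \<Psi> [0] - 2*fst \<Psi> [3] + 1"
  define y where "y = 2*fst \<Psi> [3] - 1"
  have hs: "\<forall>k\<in>{1, 3, 4}. hat_p (fst \<Psi>) k \<in> S" if "b \<in> S" "x \<in> S" "y \<in> S" for S
    using that h1 unfolding b_def x_def y_def by auto
  have A: "\<forall>k\<in>{1, 3, 4}. hat_p (fst \<Psi>) k \<in> {-1, 1}"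
    if H: "psi_apply \<Psi> (psi_apply \<Psi> (UA1, UA2)) = (UA1, UA2)"
  proof -
    have "b^2 = 1" "x^2 = 1" "y^2 = 1" using E(4-6) unfolding H b_def x_def y_def by simp_all
    thus ?thesis using hs sq1 by blast
  qed
  have B: "\<forall>k\<in>{1, 3, 4}. hat_p (fst \<Psi>) k \<in> {0, 1}"
    if H: "psi_apply \<Psi> (psi_apply \<Psi> (UA1, UA2)) = psi_apply \<Psi> (UA1, UA2)"
  proof -
    have "b^2 = b" "x^2 = x" "y^2 = y" using E(1-6) unfolding H b_def x_def y_def by simp_all
    thus ?thesis using hs sq0 by blast
  qed
  have D: "\<forall>k\<in>{1, 3, 4}. hat_p (fst \<Psi>) k \<in> {-1, 0, 1}"
    if H: "psi_apply \<Psi> (psi_apply \<Psi> (psi_apply \<Psi> (UA1, UA2))) = psi_apply \<Psi> (UA1, UA2)"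
  proof -
    have "b^3 = b" "x^3 = x" "y^3 = y" using E(1-3) E(7-9) unfolding H b_def x_def y_def by simp_all
    thus ?thesis using hs cb by blast
  qed
  show ?thesis using h1 A B D by simp
qed

end
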